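(* Let $\Gamma$ be a regular $N\times 2$ potential game. Define $F:\mathbb{R}^N\supset\Delta\to\mathbb{R}^N$ by $F(x)=\widehat{BR}^\lambda(x)-x$, the right-hand side of the smoothed best-response dynamics $\dot{x}=\widehat{BR}^\lambda(x)-x$. Then there exists $\lambda_0>0$ such that, for all $\lambda\in(0,\lambda_0)$: - every Nash distribution $x^\lambda\in\mathrm{ND}(\lambda)$ is hyperbolic, i.e. the Jacobian $DF(x^\lambda)$ is nonsingular; - a Nash distribution is linearly stable, i.e. all eigenvalues of $DF(x^\lambda)$ have negative real part, if and only if it is a pure-strategy Nash distribution.
   Context: An $N\times 2$ game has players $i=1,\dots,N$, each with action set $A_i=\{a_i^1,a_i^2\}$, and utilities $u_i:A_1\times\cdots\times A_N\to\mathbb{R}$. It is a potential game with potential $u:A_1\times\cdots\times A_N\to\mathbb{R}$ if $u(a_i,a_{-i})-u(a_i',a_{-i})=u_i(a_i,a_{-i})-u_i(a_i',a_{-i})$ for all $i$, all $a_i,a_i'\in A_i$ and all $a_{-i}$. A mixed strategy of player $i$ is a number $x_i\in[0,1]$, the probability of playing $a_i^1$. Joint mixed strategies form $\Delta=[0,1]^N$. The multilinear extension of the potential is $$U(x)=\sum_{k_1,\dots,k_N\in\{1,2\}} z_1^{k_1}(x_1)\cdots z_N^{k_N}(x_N)\,u(a_1^{k_1},\dots,a_N^{k_N}),$$ where $z_i^1(x_i)=x_i$ and $z_i^2(x_i)=1-x_i$. We write $U(a_i^k,x_{-i})$ for the value of $U$ when player $i$ plays $a_i^k$ with probability 1 and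 the others play $x_{-i}$. The set of Nash equilibria is $\mathrm{NE}=\{x\in\Delta: U(x_i,x_{-i})\ge U(x_i',x_{-i})\ \text{for all } i \text{ and all } x_i'\in[0,1]\}$. For $\lambda>0$, the logit (smoothed) best response is $$\widehat{BR}^\lambda_i(x)=\frac{\exp(U(a_i^1,x_{-i})/\lambda)}{\sum_{k=1,2}\exp(U(a_i^k,x_{-i})/\lambda)},\qquad \widehat{BR}^\lambda(x)=(\widehat{BR}^\lambda_1(x),\dots,\widehat{BR}^\lambda_N(x)).$$ The set of Nash distributions is $\mathrm{ND}(\lambda)=\{x\in\Delta: x=\widehat{BR}^\lambda(x)\}$. Regularity. Let $x^*\in\mathrm{NE}$, and relabel each player's two actions so that $x_i^*>0$ for all $i$; thus each player either mixes ($0<x_i^*<1$) or plays $a_i^1$ purely ($x_i^*=1$). - $x^*$ is quasi-strict if, for every $i$ with $x_i^*=1$, the action $a_i^2$ is not a best response to $x_{-i}^*$, i.e. $U(a_i^1,x^*_{-i})>U(a_i^2,x^*_{-i})$. - Let the mixing players be $i=1,\dots,\tilde N$ after reordering. The restricted Hessian relative to $x^*$ is the $\tilde N\times\tilde N$ matrix $H(x)=\big(\partial^2 U(x)/\partial x_i\partial x_j\big)_{i,j=1,\dots,\tilde N}$, which may be evaluated at any $x\in\Delta$. - $x^*$ is regular if it is quasi-strict and $H(x^* )$ is invertible. - The potential game is regular if every Nash equilibrium is regular. Fact used (valid in regular potential games): $\mathrm{NE}$ is finite, and there exists $\lambda_1>0$ such that, for each $x^*\in\mathrm{NE}$, there is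 a continuous branch $\lambda\mapsto x^\lambda(x^* )\in\mathrm{ND}(\lambda)$ on $(0,\lambda_1)$ with $x^\lambda(x^* )\to x^*$ as $\lambda\to0$. For each $\lambda\in(0,\lambda_1)$ these branches are pairwise distinct and exhaust $\mathrm{ND}(\lambda)$. A Nash distribution is called a pure-strategy Nash distribution if it lies on the branch of a pure-strategy Nash equilibrium $x^*\in\{0,1\}^N$, i.e. it converges to a pure Nash equilibrium as $\lambda\to0$. *)

theory Defs
  imports "HOL-Analysis.Analysis"
begin

text \<open>A pure profile is a map
  'n => bool, where True encodes action a_i^1 and False encodes a_i^2.
  A mixed profile is a vector x :: real^'n, x$i = probability of a_i^1.\<close>

definition potential_game ::
  "('n \<Rightarrow> ('n \<Rightarrow> bool) \<Rightarrow> real) \<Rightarrow> (('n \<Rightarrow> bool) \<Rightarrow> real) \<Rightarrow> bool" where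
  "potential_game util u \<longleftrightarrow>
     (\<forall>i s b b'. u (s(i := b)) - u (s(i := b')) = util i (s(i := b)) - util i (s(i := b')))"

definition simplex_prod :: "(real^'n) set" where
  "simplex_prod = {x. \<forall>i. 0 \<le> x$i \<and> x$i \<le> 1}"

definition zw :: "bool \<Rightarrow> real \<Rightarrow> real" where
  "zw b t = (if b then t else 1 - t)"

definition mlext :: "(('n::finite \<Rightarrow> bool) \<Rightarrow> real) \<Rightarrow> real^'n \<Rightarrow> real" where
  "mlext u x = (\<Sum>s\<in>UNIV. (\<Prod>i\<in>UNIV. zw (s i) (x$i)) * u s)"

definition upd :: "real^'n \<Rightarrow> 'n \<Rightarrow> real \<Rightarrow> real^'n" where
  "upd x i t = (\<chi> j. if j = i then t else x$j)"

text \<open>U(a_i^k, x_{-i}); b = True means a_i^1, b = False means a_i^2.\<close>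
definition Upure :: "(('n::finite \<Rightarrow> bool) \<Rightarrow> real) \<Rightarrow> 'n \<Rightarrow> bool \<Rightarrow> real^'n \<Rightarrow> real" where
  "Upure u i b x = mlext u (upd x i (if b then 1 else 0))"

definition NE :: "(('n::finite \<Rightarrow> bool) \<Rightarrow> real) \<Rightarrow> (real^'n) set" where
  "NE u = {x \<in> simplex_prod. \<forall>i. \<forall>t\<in>{0..1}. mlext u (upd x i t) \<le> mlext u x}"

definition logitBR :: "(('n::finite \<Rightarrow> bool) \<Rightarrow> real) \<Rightarrow> real \<Rightarrow> real^'n \<Rightarrow> real^'n" where
  "logitBR u lam x = (\<chi> i. exp (Upure u i True x / lam) /
       (exp (Upure u i True x / lam) + exp (Upure u i False x / lam)))"

definition ND :: "(('n::finite \<Rightarrow> bool) \<Rightarrow> real) \<Rightarrow> real \<Rightarrow> (real^'n) set" where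
  "ND u lam = {x \<in> simplex_prod. x = logitBR u lam x}"

definition sbr_field :: "(('n::finite \<Rightarrow> bool) \<Rightarrow> real) \<Rightarrow> real \<Rightarrow> real^'n \<Rightarrow> real^'n" where
  "sbr_field u lam x = logitBR u lam x - x"

definition partial :: "(real^'n \<Rightarrow> real) \<Rightarrow> 'n \<Rightarrow> real^'n \<Rightarrow> real" where
  "partial f i x = deriv (\<lambda>t. f (upd x i t)) (x$i)"

definition hess :: "(('n::finite \<Rightarrow> bool) \<Rightarrow> real) \<Rightarrow> real^'n \<Rightarrow> 'n \<Rightarrow> 'n \<Rightarrow> real" where
  "hess u x i j = partial (\<lambda>y. partial (mlext u) j y) i x"

definition mixing_players :: "real^'n \<Rightarrow> 'n set" where
  "mixing_players x = {i. 0 < x$i \<and> x$i < 1}"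

definition invertible_on :: "'n set \<Rightarrow> ('n \<Rightarrow> 'n \<Rightarrow> real) \<Rightarrow> bool" where
  "invertible_on M H \<longleftrightarrow> (\<exists>B. (\<forall>i\<in>M. \<forall>j\<in>M. (\<Sum>k\<in>M. H i k * B k j) = (if i = j then 1 else 0))
                            \<and> (\<forall>i\<in>M. \<forall>j\<in>M. (\<Sum>k\<in>M. B i k * H k j) = (if i = j then 1 else 0)))"

definition quasi_strict :: "(('n::finite \<Rightarrow> bool) \<Rightarrow> real) \<Rightarrow> real^'n \<Rightarrow> bool" where
  "quasi_strict u x \<longleftrightarrow>
     (\<forall>i. (x$i = 1 \<longrightarrow> Upure u i True x > Upure u i False x) \<and>
          (x$i = 0 \<longrightarrow> Upure u i False x > Upure u i True x))"

definition regular_NE :: "(('n::finite \<Rightarrow> bool) \<Rightarrow> real) \<Rightarrow> real^'n \<Rightarrow> bool" where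
  "regular_NE u x \<longleftrightarrow> x \<in> NE u \<and> quasi_strict u x \<and>
     invertible_on (mixing_players x) (hess u x)"

definition regular_game :: "(('n::finite \<Rightarrow> bool) \<Rightarrow> real) \<Rightarrow> bool" where
  "regular_game u \<longleftrightarrow> (\<forall>x\<in>NE u. regular_NE u x)"

definition complex_eigenvalue :: "real^'n^'n \<Rightarrow> complex \<Rightarrow> bool" where
  "complex_eigenvalue A mu \<longleftrightarrow>
     (\<exists>v :: complex^'n. v \<noteq> 0 \<and> (\<chi> i j. complex_of_real (A$i$j)) *v v = mu *s v)"

definition hyperbolic_pt :: "(real^'n \<Rightarrow> real^'n) \<Rightarrow> real^'n \<Rightarrow> bool" where
  "hyperbolic_pt F x \<longleftrightarrow> invertible (jacobian F (at x))"

definition linearly_stable :: "(real^'n \<Rightarrow> real^'n) \<Rightarrow> real^'n \<Rightarrow> bool" where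
  "linearly_stable F x \<longleftrightarrow> (\<forall>mu. complex_eigenvalue (jacobian F (at x)) mu \<longrightarrow> Re mu < 0)"

definition pure_profile :: "real^'n \<Rightarrow> bool" where
  "pure_profile x \<longleftrightarrow> (\<forall>i. x$i = 0 \<or> x$i = 1)"

definition pure_ND :: "(('n::finite \<Rightarrow> bool) \<Rightarrow> real) \<Rightarrow> real \<Rightarrow> real^'n \<Rightarrow> bool" where
  "pure_ND u lam x \<longleftrightarrow>
     (\<exists>y xs. continuous_on {0<..lam} y \<and> (\<forall>mu\<in>{0<..lam}. y mu \<in> ND u mu) \<and> y lam = x \<and>
            xs \<in> NE u \<and> pure_profile xs \<and> (y \<longlongrightarrow> xs) (at_right 0))"

end

theory Submission
  imports Defs
begin


lemma upd_nth[simp]: "upd x i t $ j = (if j = i then t else x$j)"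
  by (simp add: upd_def)

lemma upd_upd_same[simp]: "upd (upd x i s) i t = upd x i t"
  by (simp add: upd_def vec_eq_iff)

lemma upd_upd_comm: "i \<noteq> j \<Longrightarrow> upd (upd x i s) j t = upd (upd x j t) i s"
  by (simp add: upd_def vec_eq_iff)

lemma upd_self[simp]: "upd x i (x$i) = x"
  by (simp add: upd_def vec_eq_iff)

lemma zw_affine: "zw b t = t * zw b 1 + (1 - t) * zw b 0"
  by (simp add: zw_def)

lemma mlext_upd_expand:
  "mlext u (upd x i c) = (\<Sum>s\<in>UNIV. zw (s i) c * ((\<Prod>k\<in>UNIV-{i}. zw (s k) (x$k)) * u s))"
proof -
  have "(\<Prod>k\<in>UNIV. zw (s k) (upd x i c $ k)) = zw (s i) c * (\<Prod>k\<in>UNIV-{i}. zw (s k) (x$k))" for s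
    by (subst prod.remove[of _ i]) (auto intro!: prod.cong)
  then show ?thesis unfolding mlext_def by (simp add: mult.assoc)
qed

lemma mlext_affine:
  "mlext u (upd x i t) = t * mlext u (upd x i 1) + (1 - t) * mlext u (upd x i 0)"
proof -
  define R where "R s = (\<Prod>k\<in>UNIV-{i}. zw (s k) (x$k)) * u s" for s :: "'a \<Rightarrow> bool"
  have "(\<Sum>s\<in>UNIV. zw (s i) t * R s) = (\<Sum>s\<in>UNIV. t * (zw (s i) 1 * R s) + (1 - t) * (zw (s i) 0 * R s))"
    by (rule sum.cong[OF refl], subst zw_affine) (simp add: algebra_simps)
  also have "\<dots> = t * (\<Sum>s\<in>UNIV. zw (s i) 1 * R s) + (1 - t) * (\<Sum>s\<in>UNIV. zw (s i) 0 * R s)"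
    by (simp add: sum.distrib sum_distrib_left)
  finally show ?thesis unfolding mlext_upd_expand R_def .
qed

lemma mlext_affine': "mlext u x = x$i * mlext u (upd x i 1) + (1 - x$i) * mlext u (upd x i 0)"
  using mlext_affine[of u x i "x$i"] by simp

definition Dv :: "(('n::finite \<Rightarrow> bool) \<Rightarrow> real) \<Rightarrow> 'n \<Rightarrow> real^'n \<Rightarrow> real" where
  "Dv u i x = mlext u (upd x i 1) - mlext u (upd x i 0)"

definition Wm :: "(('n::finite \<Rightarrow> bool) \<Rightarrow> real) \<Rightarrow> 'n \<Rightarrow> 'n \<Rightarrow> real^'n \<Rightarrow> real" where
  "Wm u i j x = (if i = j then 0 else Dv u j (upd x i 1) - Dv u j (upd x i 0))"

lemma Dv_upd_same[simp]: "Dv u i (upd x i t) = Dv u i x"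
  by (simp add: Dv_def)

lemma Dv_affine: "i \<noteq> j \<Longrightarrow> Dv u j (upd x i t) = t * Dv u j (upd x i 1) + (1 - t) * Dv u j (upd x i 0)"
  unfolding Dv_def
  using mlext_affine[of u "upd x j 1" i t] mlext_affine[of u "upd x j 0" i t]
  by (simp add: upd_upd_comm algebra_simps)

lemma Wm_sym: "Wm u i j x = Wm u j i x"
  by (cases "i = j") (auto simp: Wm_def Dv_def upd_upd_comm)

lemma Wm_diag[simp]: "Wm u i i x = 0"
  by (simp add: Wm_def)

lemma continuous_on_zw[continuous_intros]:
  "continuous_on S f \<Longrightarrow> continuous_on S (\<lambda>x. zw b (f x))"
  by (cases b) (auto simp: zw_def intro!: continuous_intros)

lemma continuous_on_mlext: "continuous_on S (mlext u)"
  unfolding mlext_def by (intro continuous_intros)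

lemma continuous_on_upd[continuous_intros]: "continuous_on S f \<Longrightarrow> continuous_on S (\<lambda>x. upd (f x) i c)"
  unfolding upd_def
proof (intro continuous_on_vec_lambda)
  fix j assume "continuous_on S f"
  then show "continuous_on S (\<lambda>x. if j = i then c else f x $ j)"
    by (cases "j = i") (auto intro!: continuous_intros)
qed

lemma continuous_on_mlext_comp[continuous_intros]:
  "continuous_on S f \<Longrightarrow> continuous_on S (\<lambda>x. mlext u (f x))"
  using continuous_on_compose2[OF continuous_on_mlext[of UNIV u]] by auto

lemma continuous_on_Dv[continuous_intros]: "continuous_on S f \<Longrightarrow> continuous_on S (\<lambda>x. Dv u i (f x))"
  unfolding Dv_def by (intro continuous_intros)

lemma continuous_on_Wm[continuous_intros]: "continuous_on S f \<Longrightarrow> continuous_on S (\<lambda>x. Wm u i j (f x))"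
  unfolding Wm_def by (cases "i = j") (auto intro!: continuous_intros)



lemma has_derivative_nth: "((\<lambda>y::real^'n. y$k) has_derivative (\<lambda>h. h$k)) F"
  by (rule bounded_linear_imp_has_derivative) (rule bounded_linear_vec_nth)

lemma has_derivative_zw:
  "((\<lambda>y::real^'n. zw b (y$k)) has_derivative (\<lambda>h. (zw b 1 - zw b 0) * h$k)) F"
  by (cases b) (auto simp: zw_def intro!: derivative_eq_intros has_derivative_nth)

lemma mlext_has_derivative:
  "(mlext u has_derivative (\<lambda>h. \<Sum>j\<in>UNIV. Dv u j x * h$j)) (at x within S)"
proof -
  have d: "(mlext u has_derivative (\<lambda>h. \<Sum>s\<in>UNIV. (\<Sum>k\<in>UNIV. (zw (s k) 1 - zw (s k) 0) * h$k *
            (\<Prod>j\<in>UNIV-{k}. zw (s j) (x$j))) * u s)) (at x within S)"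
    unfolding mlext_def
    by (intro derivative_eq_intros has_derivative_prod has_derivative_zw) (auto intro!: has_derivative_zw)
  have e: "(\<Sum>s\<in>UNIV. (\<Sum>k\<in>UNIV. (zw (s k) 1 - zw (s k) 0) * h$k *
            (\<Prod>j\<in>UNIV-{k}. zw (s j) (x$j))) * u s) = (\<Sum>j\<in>UNIV. Dv u j x * h$j)" for h
  proof -
    have "(\<Sum>s\<in>UNIV. (\<Sum>k\<in>UNIV. (zw (s k) 1 - zw (s k) 0) * h$k *
            (\<Prod>j\<in>UNIV-{k}. zw (s j) (x$j))) * u s)
       = (\<Sum>s\<in>UNIV. \<Sum>k\<in>UNIV. h$k * ((zw (s k) 1 - zw (s k) 0) *
            ((\<Prod>j\<in>UNIV-{k}. zw (s j) (x$j)) * u s)))"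
      unfolding sum_distrib_right by (intro sum.cong refl) (simp add: algebra_simps)
    also have "\<dots> = (\<Sum>k\<in>UNIV. \<Sum>s\<in>UNIV. h$k * ((zw (s k) 1 - zw (s k) 0) *
            ((\<Prod>j\<in>UNIV-{k}. zw (s j) (x$j)) * u s)))"
      by (rule sum.swap)
    also have "\<dots> = (\<Sum>j\<in>UNIV. Dv u j x * h$j)"
      unfolding Dv_def mlext_upd_expand
      by (rule sum.cong[OF refl]) (simp add: sum_distrib_left sum_subtractf[symmetric] algebra_simps)
    finally show ?thesis .
  qed
  show ?thesis using d unfolding e .
qed

lemma bounded_linear_upd0: "bounded_linear (\<lambda>h::real^'n::finite. upd h i 0)"
proof -
  have "linear (\<lambda>h::real^'n. upd h i 0)"
    by (rule linearI) (auto simp: vec_eq_iff)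
  then show ?thesis by (simp add: linear_conv_bounded_linear)
qed

lemma upd_has_derivative: "((\<lambda>y. upd y i c) has_derivative (\<lambda>h. upd h i 0)) F"
proof -
  have eq: "(\<lambda>y. upd y i c) = (\<lambda>y. upd y i 0 + (\<chi> j. if j = i then c else 0))"
    by (auto simp: vec_eq_iff)
  show ?thesis unfolding eq
    using has_derivative_add[OF bounded_linear_imp_has_derivative[OF bounded_linear_upd0] has_derivative_const]
    by simp
qed

lemma mlext_upd_has_derivative:
  "((\<lambda>y. mlext u (upd y i c)) has_derivative (\<lambda>h. \<Sum>j\<in>UNIV. Dv u j (upd x i c) * (upd h i 0)$j)) (at x)"
  using has_derivative_compose[OF upd_has_derivative mlext_has_derivative]
  by (simp add: o_def)

lemma Dv_has_derivative:
  "(Dv u i has_derivative (\<lambda>h. \<Sum>j\<in>UNIV. Wm u i j x * h$j)) (at x)"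
proof -
  have "(Dv u i has_derivative (\<lambda>h. (\<Sum>j\<in>UNIV. Dv u j (upd x i 1) * (upd h i 0)$j)
           - (\<Sum>j\<in>UNIV. Dv u j (upd x i 0) * (upd h i 0)$j))) (at x)"
  proof -
    have "Dv u i = (\<lambda>y. mlext u (upd y i 1) - mlext u (upd y i 0))" by (simp add: Dv_def fun_eq_iff)
    then show ?thesis by (simp only:) (rule has_derivative_diff[OF mlext_upd_has_derivative mlext_upd_has_derivative])
  qed
  moreover have "(\<Sum>j\<in>UNIV. Dv u j (upd x i 1) * (upd h i 0)$j)
           - (\<Sum>j\<in>UNIV. Dv u j (upd x i 0) * (upd h i 0)$j) = (\<Sum>j\<in>UNIV. Wm u i j x * h$j)" for h
    by (simp add: sum_subtractf[symmetric] Wm_def) (rule sum.cong, auto simp: algebra_simps)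
  ultimately show ?thesis by simp
qed



definition sg :: "real \<Rightarrow> real" where "sg s = 1 / (1 + exp (- s))"

lemma sg_pos: "0 < sg s" and sg_lt1: "sg s < 1"
  by (auto simp: sg_def add_pos_pos)

lemma one_minus_sg: "1 - sg s = 1 / (1 + exp s)"
proof -
  have "1 + exp (-s) > 0" "1 + exp s > 0" by (auto simp: add_pos_pos)
  moreover have "exp (-s) * exp s = 1" by (simp add: exp_minus)
  ultimately show ?thesis unfolding sg_def by (simp add: field_simps)
qed

lemma sg_deriv: "(sg has_real_derivative (sg s * (1 - sg s))) (at s)"
proof -
  have pos: "1 + exp (-s) > 0" by (auto simp: add_pos_pos)
  have "(sg has_real_derivative (exp (-s) / (1 + exp (-s))^2)) (at s)"
    unfolding sg_def[abs_def]
    by (rule derivative_eq_intros refl | simp add: pos pos[THEN less_imp_neq, symmetric])+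
       (simp add: power2_eq_square field_simps)
  moreover have "exp (-s) / (1 + exp (-s))^2 = sg s * (1 - sg s)"
    using pos unfolding sg_def by (simp add: field_simps power2_eq_square)
  ultimately show ?thesis by simp
qed

lemma logitBR_nth: "lam \<noteq> 0 \<Longrightarrow> logitBR u lam x $ i = sg (Dv u i x / lam)"
proof -
  define a where "a = mlext u (upd x i 1) / lam"
  define b where "b = mlext u (upd x i 0) / lam"
  assume "lam \<noteq> 0"
  then have ab: "Dv u i x / lam = a - b" by (simp add: a_def b_def Dv_def diff_divide_distrib)
  have "exp a / (exp a + exp b) = 1 / (1 + exp (- (a - b)))"
  proof -
    have "exp a + exp b = exp a * (1 + exp (- (a - b)))"
      by (simp add: distrib_left exp_add[symmetric])
    then show ?thesis by simp
  qed
  then show ?thesis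
    unfolding logitBR_def Upure_def ab by (simp add: a_def b_def sg_def)
qed

lemma partial_mlext: "partial (mlext u) j y = Dv u j y"
proof -
  have "((\<lambda>t. mlext u (upd y j t)) has_real_derivative Dv u j y) (at t)" for t
  proof -
    have e: "(\<lambda>t. mlext u (upd y j t)) = (\<lambda>t. t * mlext u (upd y j 1) + (1 - t) * mlext u (upd y j 0))"
      by (rule ext) (rule mlext_affine)
    show ?thesis unfolding e Dv_def
      by (rule derivative_eq_intros refl | simp)+
  qed
  then show ?thesis unfolding partial_def by (rule DERIV_imp_deriv)
qed

lemma hess_eq: "hess u x i j = Wm u i j x"
proof -
  have "((\<lambda>t. Dv u j (upd x i t)) has_real_derivative Wm u i j x) (at t)" for t
  proof (cases "i = j")
    case True
    then show ?thesis by (simp add: Wm_def)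
  next
    case False
    have e: "(\<lambda>t. Dv u j (upd x i t)) = (\<lambda>t. t * Dv u j (upd x i 1) + (1 - t) * Dv u j (upd x i 0))"
      by (rule ext) (rule Dv_affine[OF False])
    show ?thesis unfolding e using False unfolding Wm_def
      by (rule_tac derivative_eq_intros refl | simp)+
  qed
  then show ?thesis unfolding hess_def partial_mlext[abs_def] partial_def by (rule DERIV_imp_deriv)
qed

lemma vec_sum_axis: "(\<chi> i. f i) = (\<Sum>i\<in>UNIV. f i *\<^sub>R axis i (1::real))"
proof -
  have "(\<Sum>x\<in>UNIV. f x * (if i = x then 1 else 0)) = f i" for i
  proof -
    have "(\<Sum>x\<in>UNIV. f x * (if i = x then 1 else 0)) = (\<Sum>x\<in>UNIV. (if i = x then f x else 0))"
      by (rule sum.cong) auto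
    then show ?thesis by simp
  qed
  then show ?thesis by (simp add: vec_eq_iff sum_component axis_def)
qed

lemma has_derivative_vec_lambda':
  fixes g :: "'n::finite \<Rightarrow> 'a::real_normed_vector \<Rightarrow> real"
  assumes "\<And>i. (g i has_derivative g' i) (at x)"
  shows "((\<lambda>y. \<chi> i. g i y) has_derivative (\<lambda>h. \<chi> i. g' i h)) (at x)"
proof -
  have e1: "(\<lambda>y. \<chi> i. g i y) = (\<lambda>y. \<Sum>i\<in>UNIV. g i y *\<^sub>R axis i (1::real))"
    by (rule ext, rule vec_sum_axis)
  have e2: "(\<lambda>y. \<chi> i. g' i y) = (\<lambda>y. \<Sum>i\<in>UNIV. g' i y *\<^sub>R axis i (1::real))"
    by (rule ext, rule vec_sum_axis)
  show ?thesis unfolding e1 e2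
    by (intro has_derivative_sum has_derivative_scaleR_left assms)
qed

lemma sbr_has_derivative:
  assumes lam: "lam \<noteq> 0"
  shows "(sbr_field u lam has_derivative
     (\<lambda>h. (\<chi> i. sg (Dv u i x / lam) * (1 - sg (Dv u i x / lam)) / lam * (\<Sum>j\<in>UNIV. Wm u i j x * h$j)) - h)) (at x)"
proof -
  have e: "sbr_field u lam = (\<lambda>y. (\<chi> i. sg (Dv u i y / lam)) - y)"
    using lam by (auto simp: sbr_field_def vec_eq_iff logitBR_nth)
  have "((\<lambda>y. sg (Dv u i y / lam)) has_derivative
          (\<lambda>h. sg (Dv u i x / lam) * (1 - sg (Dv u i x / lam)) / lam * (\<Sum>j\<in>UNIV. Wm u i j x * h$j))) (at x)" for i
  proof -
    have d1: "((\<lambda>y. Dv u i y / lam) has_derivative (\<lambda>h. (\<Sum>j\<in>UNIV. Wm u i j x * h$j) / lam)) (at x)"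
      by (intro derivative_eq_intros Dv_has_derivative) (auto intro: Dv_has_derivative simp: lam)
    have d2: "(sg has_derivative (\<lambda>t. t * (sg (Dv u i x / lam) * (1 - sg (Dv u i x / lam))))) (at (Dv u i x / lam))"
      using sg_deriv[of "Dv u i x / lam"] by (simp add: has_field_derivative_def mult.commute[of _ "sg _ * _"])
    show ?thesis using has_derivative_compose[OF d1 d2] by (simp add: o_def algebra_simps diff_divide_distrib)
  qed
  then show ?thesis unfolding e
    by (intro has_derivative_diff has_derivative_vec_lambda' has_derivative_ident)
qed

lemma jacobian_sbr:
  assumes "lam \<noteq> 0"
  shows "jacobian (sbr_field u lam) (at x) =
    (\<chi> i j. sg (Dv u i x / lam) * (1 - sg (Dv u i x / lam)) / lam * Wm u i j x - (if i = j then 1 else 0))"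
  unfolding jacobian_def frechet_derivative_at[OF sbr_has_derivative[OF assms], symmetric]
  by (simp add: matrix_def vec_eq_iff axis_def if_distrib cong: if_cong)



definition Jm :: "('n::finite \<Rightarrow> real) \<Rightarrow> ('n \<Rightarrow> 'n \<Rightarrow> real) \<Rightarrow> real^'n^'n" where
  "Jm p W = (\<chi> i j. p i * W i j - (if i = j then 1 else 0))"

definition Qf :: "('n::finite \<Rightarrow> real) \<Rightarrow> ('n \<Rightarrow> 'n \<Rightarrow> real) \<Rightarrow> real^'n \<Rightarrow> real" where
  "Qf p W v = (\<Sum>i\<in>UNIV. \<Sum>j\<in>UNIV. v$i * W i j * v$j) - (\<Sum>i\<in>UNIV. (v$i)^2 / p i)"

lemma sum_if_eq_mult: fixes g :: "'n::finite \<Rightarrow> real" shows "(\<Sum>i\<in>(UNIV::'n::finite set). (if i = k then 1 else 0) * g i) = g k"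
proof -
  have "(\<Sum>i\<in>(UNIV::'n set). (if i = k then 1 else 0) * g i) = (\<Sum>i\<in>UNIV. if i = k then g i else 0)"
    by (rule sum.cong) auto
  then show ?thesis by simp
qed

lemma sum_if_eq_mult': fixes g :: "'n::finite \<Rightarrow> real" shows "(\<Sum>i\<in>(UNIV::'n::finite set). g i * (if i = k then 1 else 0)) = g k"
  using sum_if_eq_mult[of k g] by (simp add: mult.commute)

lemma Jm_mult: "(Jm p W *v v) $ i = p i * (\<Sum>j\<in>UNIV. W i j * v$j) - v$i"
  by (simp add: Jm_def matrix_vector_mult_def left_diff_distrib sum_subtractf sum_distrib_left
      mult.assoc if_distrib[of "\<lambda>x. x * _"] cong: if_cong)

lemma genH:
  fixes p :: "'n::finite \<Rightarrow> real"
  assumes p: "\<And>i. p i > 0"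
    and H: "\<And>v. (\<forall>i. (\<Sum>j\<in>UNIV. W i j * v$j) = v$i / p i) \<Longrightarrow> v = 0"
  shows "invertible (Jm p W)"
  unfolding invertible_left_inverse matrix_left_invertible_ker
proof (intro allI impI)
  fix v assume "Jm p W *v v = 0"
  then have "\<forall>i. p i * (\<Sum>j\<in>UNIV. W i j * v$j) - v$i = 0"
    by (metis Jm_mult zero_index)
  then have "\<forall>i. (\<Sum>j\<in>UNIV. W i j * v$j) = v$i / p i"
    using p by (simp add: field_simps less_imp_neq[OF p, symmetric])
  then show "v = 0" by (rule H)
qed

lemma Qf_zero[simp]: "Qf p W 0 = 0"
  by (simp add: Qf_def)

lemma genA:
  fixes p :: "'n::finite \<Rightarrow> real"
  assumes p: "\<And>i. p i > 0"
    and Q: "\<And>v. v \<noteq> 0 \<Longrightarrow> Qf p W v < 0"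
    and ev: "complex_eigenvalue (Jm p W) mu"
  shows "Re mu < 0"
proof -
  obtain v :: "complex^'n" where v0: "v \<noteq> 0" and ev: "(\<chi> i j. complex_of_real (Jm p W $ i $ j)) *v v = mu *s v"
    using ev unfolding complex_eigenvalue_def by blast
  define a where "a = (\<chi> i. Re (v$i))"
  define b where "b = (\<chi> i. Im (v$i))"
  have comp: "(\<Sum>j\<in>UNIV. complex_of_real (Jm p W $ i $ j) * v$j) = mu * v$i" for i
    using ev by (simp add: vec_eq_iff matrix_vector_mult_def)
  have re: "(\<Sum>j\<in>UNIV. (p i * W i j - (if i = j then 1 else 0)) * a$j) = Re mu * a$i - Im mu * b$i" for i
    using arg_cong[OF comp[of i], of Re] by (simp add: a_def b_def Jm_def)
  have im: "(\<Sum>j\<in>UNIV. (p i * W i j - (if i = j then 1 else 0)) * b$j) = Re mu * b$i + Im mu * a$i" for i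
    using arg_cong[OF comp[of i], of Im] by (simp add: a_def b_def Jm_def)
  have re': "p i * (\<Sum>j\<in>UNIV. W i j * a$j) - a$i = Re mu * a$i - Im mu * b$i" for i
    using re[of i] Jm_mult[of p W a i] by (simp add: Jm_def matrix_vector_mult_def)
  have im': "p i * (\<Sum>j\<in>UNIV. W i j * b$j) - b$i = Re mu * b$i + Im mu * a$i" for i
    using im[of i] Jm_mult[of p W b i] by (simp add: Jm_def matrix_vector_mult_def)
  have key: "(\<Sum>j\<in>UNIV. a$i * W i j * a$j) + (\<Sum>j\<in>UNIV. b$i * W i j * b$j) - ((a$i)^2 / p i + (b$i)^2 / p i)
      = Re mu * ((a$i)^2 / p i + (b$i)^2 / p i)" for i
  proof -
    have pi: "p i > 0" by (rule p)
    have e1: "(\<Sum>j\<in>UNIV. a$i * W i j * a$j) = a$i * (\<Sum>j\<in>UNIV. W i j * a$j)"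
      by (simp add: sum_distrib_left mult.assoc)
    have e2: "(\<Sum>j\<in>UNIV. b$i * W i j * b$j) = b$i * (\<Sum>j\<in>UNIV. W i j * b$j)"
      by (simp add: sum_distrib_left mult.assoc)
    have s1: "(\<Sum>j\<in>UNIV. W i j * a$j) = (Re mu * a$i - Im mu * b$i + a$i) / p i"
      using re'[of i] pi by (simp add: field_simps)
    have s2: "(\<Sum>j\<in>UNIV. W i j * b$j) = (Re mu * b$i + Im mu * a$i + b$i) / p i"
      using im'[of i] pi by (simp add: field_simps)
    show ?thesis unfolding e1 e2 s1 s2 using pi
      by (simp add: field_simps power2_eq_square)
  qed
  define S where "S = (\<Sum>i\<in>UNIV. (a$i)^2 / p i + (b$i)^2 / p i)"
  have sumkey: "Qf p W a + Qf p W b = Re mu * S"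
  proof -
    have "(\<Sum>i\<in>UNIV. (\<Sum>j\<in>UNIV. a$i * W i j * a$j) + (\<Sum>j\<in>UNIV. b$i * W i j * b$j) - ((a$i)^2 / p i + (b$i)^2 / p i))
      = (\<Sum>i\<in>UNIV. Re mu * ((a$i)^2 / p i + (b$i)^2 / p i))"
      by (rule sum.cong[OF refl key])
    then show ?thesis by (simp add: Qf_def S_def sum.distrib sum_subtractf sum_distrib_left algebra_simps)
  qed
  obtain k where "v$k \<noteq> 0" using v0 by (auto simp: vec_eq_iff)
  then have abk: "a$k \<noteq> 0 \<or> b$k \<noteq> 0" by (auto simp: a_def b_def complex_eq_iff)
  have Spos: "S > 0"
  proof -
    have "S \<ge> (a$k)^2 / p k + (b$k)^2 / p k" unfolding S_def
      by (rule member_le_sum) (auto intro!: add_nonneg_nonneg divide_nonneg_pos p)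
    moreover have "(a$k)^2 / p k + (b$k)^2 / p k > 0"
    proof -
      have "(a$k)^2 / p k \<ge> 0" "(b$k)^2 / p k \<ge> 0" using p[of k] by auto
      moreover have "(a$k)^2 / p k > 0 \<or> (b$k)^2 / p k > 0" using abk p[of k] by auto
      ultimately show ?thesis by linarith
    qed
    ultimately show ?thesis by linarith
  qed
  have "Qf p W a \<le> 0" "Qf p W b \<le> 0"
    using Q[of a] Q[of b] by (cases "a = 0"; cases "b = 0"; auto)+
  moreover have "a \<noteq> 0 \<or> b \<noteq> 0" using abk by auto
  ultimately have "Qf p W a + Qf p W b < 0" using Q[of a] Q[of b] by auto
  then show ?thesis using sumkey Spos by (simp add: mult_less_0_iff)
qed



definition fq :: "('n::finite \<Rightarrow> 'n \<Rightarrow> real) \<Rightarrow> real^'n \<Rightarrow> real" where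
  "fq W v = (\<Sum>i\<in>UNIV. \<Sum>j\<in>UNIV. v$i * W i j * v$j)"

definition nq :: "('n::finite \<Rightarrow> real) \<Rightarrow> real^'n \<Rightarrow> real" where
  "nq p v = (\<Sum>i\<in>UNIV. (v$i)^2 / p i)"

lemma quad_le0: fixes c d :: real assumes "\<And>t. 2 * t * c + t^2 * d \<le> 0" shows "c = 0"
proof (rule ccontr)
  assume c: "c \<noteq> 0"
  define t where "t = c / (\<bar>d\<bar> + 1)"
  have pos: "\<bar>d\<bar> + 1 > 0" by simp
  define e where "e = \<bar>d\<bar> + 1"
  have epos: "e > 0" by (simp add: e_def)
  have eq: "2 * t * c + t^2 * d = (c^2 / e) * (2 + d / e)"
    unfolding t_def e_def[symmetric] using epos by (simp add: field_simps power2_eq_square)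
  have de: "d / e > -1" using epos by (simp add: e_def field_simps)
  have ce: "c^2 / e > 0" using c epos by simp
  have "2 + d / e > 0" using de by linarith
  then have "(c^2 / e) * (2 + d / e) > 0" using ce by (intro mult_pos_pos)
  then have "2 * t * c + t^2 * d > 0" by (simp only: eq)
  then show False using assms[of t] by linarith
qed

lemma fq_expand: "fq W (v + t *\<^sub>R w) = fq W v + t * (\<Sum>i\<in>UNIV. \<Sum>j\<in>UNIV. w$i * W i j * v$j + v$i * W i j * w$j) + t^2 * fq W w"
  unfolding fq_def
  by (simp add: algebra_simps sum.distrib sum_distrib_left power2_eq_square)

lemma nq_expand: "nq p (v + t *\<^sub>R w) = nq p v + 2 * t * (\<Sum>i\<in>UNIV. w$i * v$i / p i) + t^2 * nq p w"
proof -
  have "(v$i + t * w$i)^2 / p i = (v$i)^2 / p i + 2 * t * (w$i * v$i / p i) + t^2 * ((w$i)^2 / p i)" for i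
    by (simp add: divide_inverse power2_eq_square algebra_simps)
  then show ?thesis unfolding nq_def by (simp add: sum.distrib sum_distrib_left)
qed

lemma nq_pos: fixes p :: "'n::finite \<Rightarrow> real" assumes p: "\<And>i. p i > 0" and "v \<noteq> 0" shows "nq p v > 0"
proof -
  obtain k where k: "v$k \<noteq> 0" using assms(2) by (auto simp: vec_eq_iff)
  have "nq p v \<ge> (v$k)^2 / p k" unfolding nq_def
    by (rule member_le_sum) (auto intro!: divide_nonneg_pos p)
  moreover have "(v$k)^2 / p k > 0" using k p[of k] by simp
  ultimately show ?thesis by linarith
qed

lemma nq_scale: "nq p (c *\<^sub>R v) = c^2 * nq p v"
  unfolding nq_def by (simp add: sum_distrib_left power_mult_distrib)

lemma fq_scale: "fq W (c *\<^sub>R v) = c^2 * fq W v"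
  unfolding fq_def by (simp add: sum_distrib_left power2_eq_square algebra_simps)

lemma genB:
  fixes p :: "'n::finite \<Rightarrow> real"
  assumes p: "\<And>i. p i > 0"
    and sym: "\<And>i j. W i j = W j i"
    and v1: "v1 \<noteq> 0" and Qv: "Qf p W v1 \<ge> 0"
  shows "\<exists>mu. complex_eigenvalue (Jm p W) mu \<and> Re mu \<ge> 0"
proof -
  define E where "E = {v::real^'n. nq p v = 1}"
  have cont_nq: "continuous_on UNIV (nq p)" unfolding nq_def by (intro continuous_intros) (auto simp: less_imp_neq[OF p, symmetric])
  have cont_fq: "continuous_on S (fq W)" for S unfolding fq_def by (intro continuous_intros)
  have "closed E" unfolding E_def
    using closed_Collect_eq[OF _ continuous_on_const, of "nq p" 1] cont_nq by auto
  moreover have "bounded E"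
    unfolding bounded_iff
  proof (intro exI ballI)
    fix v assume "v \<in> E"
    then have n1: "nq p v = 1" by (simp add: E_def)
    have "\<bar>v$i\<bar> \<le> sqrt (p i) + 1" for i
    proof -
      have "(v$i)^2 / p i \<le> nq p v" unfolding nq_def
        by (rule member_le_sum) (auto intro!: divide_nonneg_pos p)
      then have "(v$i)^2 \<le> p i" using p[of i] n1 by (simp add: field_simps)
      then have "\<bar>v$i\<bar> \<le> sqrt (p i)" using real_sqrt_abs real_sqrt_le_mono by fastforce
      then show ?thesis by simp
    qed
    then have "(\<Sum>i\<in>UNIV. \<bar>v$i\<bar>) \<le> (\<Sum>i\<in>UNIV. sqrt (p i) + 1)" by (intro sum_mono) auto
    then show "norm v \<le> (\<Sum>i\<in>UNIV. sqrt (p i) + 1)" using norm_le_l1_cart[of v] by linarith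
  qed
  ultimately have "compact E" by (simp add: compact_eq_bounded_closed)
  obtain k0 :: 'n where True by blast
  have "axis k0 (sqrt (p k0)) \<in> E"
  proof -
    have "nq p (axis k0 (sqrt (p k0))) = (\<Sum>i\<in>UNIV. (if i = k0 then 1 else 0) * ((sqrt (p k0))^2 / p k0))"
      unfolding nq_def by (intro sum.cong) (auto simp: axis_def)
    also have "\<dots> = 1" using p[of k0] by (simp only: sum_if_eq_mult) simp
    finally show ?thesis by (simp add: E_def)
  qed
  then have "E \<noteq> {}" by auto
  from continuous_attains_sup[OF \<open>compact E\<close> this cont_fq]
  obtain v0 where v0E: "v0 \<in> E" and v0max: "\<And>y. y \<in> E \<Longrightarrow> fq W y \<le> fq W v0" by blast
  define m where "m = fq W v0"
  have bound: "fq W v \<le> m * nq p v" for v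
  proof (cases "v = 0")
    case True then show ?thesis by (simp add: fq_def nq_def)
  next
    case False
    then have np: "nq p v > 0" by (rule nq_pos[OF p])
    define c where "c = 1 / sqrt (nq p v)"
    have c2: "c^2 = 1 / nq p v" using np by (simp add: c_def power_divide)
    have "c *\<^sub>R v \<in> E" unfolding E_def using np by (simp add: nq_scale c2)
    then have "fq W (c *\<^sub>R v) \<le> m" using v0max by (simp add: m_def)
    then have "c^2 * fq W v \<le> m" by (simp add: fq_scale)
    then show ?thesis using np by (simp add: c2 field_simps)
  qed
  have nv0: "nq p v0 = 1" using v0E by (simp add: E_def)
  have grad: "(\<Sum>j\<in>UNIV. W k j * v0$j) = m * v0$k / p k" for k
  proof -
    define w :: "real^'n" where "w = axis k 1"
    have symsum: "(\<Sum>i\<in>UNIV. \<Sum>j\<in>UNIV. v0$i * W i j * w$j) = (\<Sum>i\<in>UNIV. \<Sum>j\<in>UNIV. w$i * W i j * v0$j)"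
      by (subst sum.swap) (simp add: sym mult.commute mult.left_commute)
    have "2 * t * ((\<Sum>i\<in>UNIV. \<Sum>j\<in>UNIV. w$i * W i j * v0$j) - m * (\<Sum>i\<in>UNIV. w$i * v0$i / p i))
          + t^2 * (fq W w - m * nq p w) \<le> 0" for t
    proof -
      have "fq W (v0 + t *\<^sub>R w) \<le> m * nq p (v0 + t *\<^sub>R w)" by (rule bound)
      moreover have A: "(\<Sum>i\<in>UNIV. \<Sum>j\<in>UNIV. w$i * W i j * v0$j + v0$i * W i j * w$j)
          = 2 * (\<Sum>i\<in>UNIV. \<Sum>j\<in>UNIV. w$i * W i j * v0$j)"
        by (simp only: sum.distrib symsum)
      ultimately show ?thesis unfolding fq_expand nq_expand A m_def[symmetric] nv0
        by (simp add: algebra_simps)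
    qed
    then have "(\<Sum>i\<in>UNIV. \<Sum>j\<in>UNIV. w$i * W i j * v0$j) - m * (\<Sum>i\<in>UNIV. w$i * v0$i / p i) = 0"
      by (rule quad_le0)
    moreover have "(\<Sum>i\<in>UNIV. \<Sum>j\<in>UNIV. w$i * W i j * v0$j) = (\<Sum>j\<in>UNIV. W k j * v0$j)"
      unfolding w_def axis_def using sum_if_eq_mult[of k "\<lambda>i. \<Sum>j\<in>UNIV. W i j * v0$j"]
      by (simp add: sum_distrib_left mult.assoc)
    moreover have "(\<Sum>i\<in>UNIV. w$i * v0$i / p i) = v0$k / p k"
      unfolding w_def axis_def using sum_if_eq_mult[of k "\<lambda>i. v0$i / p i"] by simp
    ultimately show ?thesis by simp
  qed
  have eig: "Jm p W *v v0 = (m - 1) *\<^sub>R v0"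
  proof -
    have "(Jm p W *v v0) $ i = ((m - 1) *\<^sub>R v0) $ i" for i
    proof -
      have "(Jm p W *v v0) $ i = p i * (m * v0$i / p i) - v0$i" unfolding Jm_mult grad ..
      also have "\<dots> = (m - 1) * v0$i" using p[of i] by (simp add: field_simps)
      finally show ?thesis by simp
    qed
    then show ?thesis by (simp add: vec_eq_iff)
  qed
  have m1: "m \<ge> 1"
  proof -
    have "fq W v1 \<ge> nq p v1" using Qv by (simp add: Qf_def fq_def nq_def)
    moreover have "nq p v1 > 0" by (rule nq_pos[OF p v1])
    moreover note bound[of v1]
    ultimately have "1 * nq p v1 \<le> m * nq p v1" by linarith
    then show ?thesis using \<open>nq p v1 > 0\<close> by (rule mult_right_le_imp_le)
  qed
  define V where "V = (\<chi> i. complex_of_real (v0$i))"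
  have "v0 \<noteq> 0" using nv0 by (auto simp: nq_def)
  then have "V \<noteq> 0" by (auto simp: V_def vec_eq_iff)
  moreover have "(\<chi> i j. complex_of_real (Jm p W $ i $ j)) *v V = complex_of_real (m - 1) *s V"
  proof -
    have "(\<Sum>j\<in>UNIV. complex_of_real (Jm p W $ i $ j) * complex_of_real (v0$j))
        = complex_of_real ((Jm p W *v v0) $ i)" for i
      by (simp add: matrix_vector_mult_def)
    moreover have "(Jm p W *v v0) $ i = (m - 1) * v0$i" for i using eig by simp
    ultimately have "(\<Sum>j\<in>UNIV. complex_of_real (Jm p W $ i $ j) * complex_of_real (v0$j))
        = complex_of_real (m - 1) * complex_of_real (v0$i)" for i by simp
    then show ?thesis by (simp add: vec_eq_iff matrix_vector_mult_def V_def algebra_simps)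
  qed
  ultimately have "complex_eigenvalue (Jm p W) (complex_of_real (m - 1))"
    unfolding complex_eigenvalue_def by blast
  then show ?thesis using m1 by (intro exI[of _ "complex_of_real (m - 1)"]) simp
qed



lemma onep: "0 < 1 + exp (s::real)" by (simp add: add_pos_pos)

lemma sg_prod_le: "sg s * (1 - sg s) \<le> exp (- \<bar>s\<bar>)"
proof -
  have e: "sg s * (1 - sg s) = 1 / ((1 + exp (-s)) * (1 + exp s))"
    unfolding one_minus_sg by (simp add: sg_def)
  have "exp \<bar>s\<bar> \<le> (1 + exp (-s)) * (1 + exp s)"
  proof (cases "s \<ge> 0")
    case True
    have "exp s \<le> 1 * (1 + exp s)" by simp
    also have "\<dots> \<le> (1 + exp (-s)) * (1 + exp s)" by (intro mult_right_mono) (auto simp: add_nonneg_nonneg)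
    finally show ?thesis using True by simp
  next
    case False
    have "exp (-s) \<le> (1 + exp (-s)) * 1" by simp
    also have "\<dots> \<le> (1 + exp (-s)) * (1 + exp s)" by (intro mult_left_mono) (auto simp: add_nonneg_nonneg)
    finally show ?thesis using False by simp
  qed
  then have "1 / ((1 + exp (-s)) * (1 + exp s)) \<le> 1 / exp \<bar>s\<bar>"
    by (intro divide_left_mono) (auto intro!: mult_pos_pos onep)
  then show ?thesis unfolding e by (simp add: exp_minus field_simps)
qed

lemma exp_ge_sq4: fixes t :: real assumes "t \<ge> 0" shows "t^2 / 4 \<le> exp t"
proof -
  have "(t/2)^2 \<le> (1 + t/2)^2" using assms by (intro power_mono) auto
  also have "\<dots> \<le> (exp (t/2))^2" using assms by (intro power_mono exp_ge_add_one_self) auto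
  also have "\<dots> = exp t" by (simp add: exp_double[symmetric] power2_eq_square exp_add[symmetric])
  finally show ?thesis by (simp add: power_divide)
qed

lemma inv_p_big:
  assumes lam: "lam > 0" and xi: "xi = sg (D / lam)" and D: "\<bar>D\<bar> \<ge> \<delta>" and del: "\<delta> > 0"
  shows "lam / (xi * (1 - xi)) \<ge> \<delta>^2 / (4 * lam)"
proof -
  have pos: "xi * (1 - xi) > 0" using xi sg_pos sg_lt1 by simp
  have "xi * (1 - xi) \<le> exp (- \<bar>D / lam\<bar>)" unfolding xi by (rule sg_prod_le)
  also have "\<dots> \<le> exp (- (\<delta> / lam))" using D lam by (auto simp: abs_divide divide_right_mono)
  finally have a: "xi * (1 - xi) \<le> exp (- (\<delta> / lam))" .
  have "\<delta>^2 / (4 * lam) = lam * ((\<delta> / lam)^2 / 4)" using lam by (simp add: field_simps power2_eq_square)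
  also have "\<dots> \<le> lam * exp (\<delta> / lam)" using lam del by (intro mult_left_mono exp_ge_sq4) auto
  also have "\<dots> = lam / exp (- (\<delta> / lam))" by (simp add: exp_minus divide_inverse)
  also have "\<dots> \<le> lam / (xi * (1 - xi))" using a pos lam by (intro divide_left_mono) auto
  finally show ?thesis .
qed

lemma sg_tail_le: "D \<ge> 0 \<Longrightarrow> lam > 0 \<Longrightarrow> (1 - sg (D / lam)) * D \<le> lam"
proof -
  assume D: "D \<ge> 0" and lam: "lam > 0"
  have "(1 - sg (D / lam)) * D = D / (1 + exp (D / lam))" by (simp add: one_minus_sg)
  also have "\<dots> = lam * ((D / lam) / (1 + exp (D / lam)))" using lam by simp
  finally have "(1 - sg (D / lam)) * D = lam * ((D / lam) / (1 + exp (D / lam)))" .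
  also have "\<dots> \<le> lam * 1"
  proof -
    have "D / lam \<le> 1 + exp (D / lam)" using exp_ge_add_one_self[of "D/lam"] D lam by linarith
    then have "(D / lam) / (1 + exp (D / lam)) \<le> (1 + exp (D / lam)) / (1 + exp (D / lam))"
      using onep[of "D/lam"] by (intro divide_right_mono) auto
    then have "(D / lam) / (1 + exp (D / lam)) \<le> 1" using onep[of "D/lam"] by simp
    then show ?thesis using lam by (intro mult_left_mono) auto
  qed
  finally show ?thesis by simp
qed

lemma sg_neg: "sg (- s) = 1 - sg s"
  by (simp only: one_minus_sg) (simp add: sg_def)

lemma sg_tail_le': "D \<le> 0 \<Longrightarrow> lam > 0 \<Longrightarrow> sg (D / lam) * (- D) \<le> lam"
  using sg_tail_le[of "-D" lam] by (simp add: sg_neg)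

lemma sg_close1: "s \<ge> 0 \<Longrightarrow> 1 - sg s \<le> exp (- s)"
proof -
  have "1 / (1 + exp s) \<le> 1 / exp s" by (intro divide_left_mono) (auto intro!: mult_pos_pos onep)
  then show ?thesis unfolding one_minus_sg by (simp add: exp_minus inverse_eq_divide)
qed

lemma sg_close0: "s \<le> 0 \<Longrightarrow> sg s \<le> exp s"
  using sg_close1[of "-s"] by (simp add: sg_neg)

lemma exp_diff_le: fixes a b :: real assumes "b \<le> a" shows "exp a - exp b \<le> exp a * (a - b)"
proof -
  have "1 - exp (b - a) \<le> a - b" using exp_ge_add_one_self[of "b - a"] by linarith
  then have "exp a * (1 - exp (b - a)) \<le> exp a * (a - b)" by (intro mult_left_mono) auto
  then show ?thesis by (simp add: algebra_simps exp_diff)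
qed

lemma sg_mono: assumes "a \<le> b" shows "sg a \<le> sg b"
proof -
  have "exp (-b) \<le> exp (-a)" using assms by simp
  then have "1 + exp (-b) \<le> 1 + exp (-a)" by simp
  then show ?thesis unfolding sg_def
    by (intro divide_left_mono) (auto intro!: mult_pos_pos onep)
qed

lemma sg_lip_pos:
  assumes c: "c \<ge> 0" and a: "a \<ge> c" and b: "b \<ge> c"
  shows "\<bar>sg a - sg b\<bar> \<le> exp (- c) * \<bar>a - b\<bar>"
proof -
  have gen: "sg a - sg b \<le> exp (-c) * (a - b)" if ba: "b \<le> a" and a: "a \<ge> c" and b: "b \<ge> c" for a b
  proof -
    have n1: "1 + exp a \<noteq> 0" "1 + exp b \<noteq> 0" using add_pos_pos[OF zero_less_one exp_gt_zero] by (metis less_irrefl)+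
    have "sg a - sg b = (1 - sg b) - (1 - sg a)" by simp
    also have "\<dots> = 1 / (1 + exp b) - 1 / (1 + exp a)" unfolding one_minus_sg ..
    also have "\<dots> = (exp a - exp b) / ((1 + exp a) * (1 + exp b))"
      using n1 by (simp add: field_simps)
    finally have "sg a - sg b = (exp a - exp b) / ((1 + exp a) * (1 + exp b))" .
    also have "\<dots> \<le> exp a * (a - b) / ((1 + exp a) * (1 + exp b))"
      using exp_diff_le[OF ba] by (intro divide_right_mono) (auto simp: add_nonneg_nonneg)
    also have "\<dots> \<le> exp a * (a - b) / (exp a * exp b)"
      using ba by (intro divide_left_mono mult_mono) (auto simp: add_nonneg_nonneg intro!: mult_pos_pos onep)
    also have "\<dots> = exp (- b) * (a - b)" by (simp add: exp_minus field_simps)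
    also have "\<dots> \<le> exp (- c) * (a - b)" using ba b by (intro mult_right_mono) auto
    finally show ?thesis .
  qed
  show ?thesis
  proof (cases "b \<le> a")
    case True
    moreover have "sg b \<le> sg a" using True by (rule sg_mono)
    ultimately show ?thesis using gen[OF True a b] by simp
  next
    case False
    then have ab: "a \<le> b" by simp
    moreover have "sg a \<le> sg b" using ab by (rule sg_mono)
    ultimately show ?thesis using gen[OF ab b a] by (simp add: abs_minus_commute)
  qed
qed

lemma sg_lip:
  assumes c: "c \<ge> 0" and ab: "(a \<ge> c \<and> b \<ge> c) \<or> (a \<le> -c \<and> b \<le> -c)"
  shows "\<bar>sg a - sg b\<bar> \<le> exp (- c) * \<bar>a - b\<bar>"
  using ab
proof
  assume "a \<ge> c \<and> b \<ge> c" then show ?thesis using sg_lip_pos c by auto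
next
  assume "a \<le> -c \<and> b \<le> -c"
  then have "\<bar>sg (-a) - sg (-b)\<bar> \<le> exp (- c) * \<bar>(-a) - (-b)\<bar>" by (intro sg_lip_pos[OF c]) auto
  then show ?thesis by (simp add: sg_neg abs_minus_commute)
qed

lemma ND_nth: "x \<in> ND u lam \<Longrightarrow> lam > 0 \<Longrightarrow> x$i = sg (Dv u i x / lam)"
  unfolding ND_def by (metis (mono_tags, lifting) logitBR_nth mem_Collect_eq less_irrefl)

lemma ND_open01: "x \<in> ND u lam \<Longrightarrow> lam > 0 \<Longrightarrow> 0 < x$i \<and> x$i < 1"
  using ND_nth sg_pos sg_lt1 by metis



lemma cont_ev:
  fixes g :: "real^'n::finite \<Rightarrow> real"
  assumes "continuous_on UNIV g" "e > 0"
  shows "eventually (\<lambda>x. \<bar>g x - g a\<bar> < e) (nhds a)"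
proof -
  obtain d where "d > 0" "\<forall>x'. dist x' a < d \<longrightarrow> dist (g x') (g a) < e"
    using assms unfolding continuous_on_iff by blast
  then show ?thesis unfolding eventually_nhds_metric by (auto simp: dist_real_def)
qed

definition pp :: "real \<Rightarrow> real^'n \<Rightarrow> 'n \<Rightarrow> real" where
  "pp lam x i = x$i * (1 - x$i) / lam"

lemma jacobian_ND:
  assumes "x \<in> ND u lam" "lam > 0"
  shows "jacobian (sbr_field u lam) (at x) = Jm (pp lam x) (\<lambda>i j. Wm u i j x)"
proof -
  have "lam \<noteq> 0" using assms by simp
  then show ?thesis unfolding jacobian_sbr[OF \<open>lam \<noteq> 0\<close>] Jm_def pp_def
    using ND_nth[OF assms] by (simp add: vec_eq_iff)
qed

lemma pp_pos: "x \<in> ND u lam \<Longrightarrow> lam > 0 \<Longrightarrow> pp lam x i > 0"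
  using ND_open01[of x u lam i] unfolding pp_def by simp

lemma negdef_H:
  assumes Q: "\<And>v. v \<noteq> 0 \<Longrightarrow> Qf p W v < 0"
    and h: "\<forall>i. (\<Sum>j\<in>UNIV. W i j * v$j) = v$i / p i"
  shows "v = 0"
proof (rule ccontr)
  assume "v \<noteq> 0"
  then have "Qf p W v < 0" by (rule Q)
  moreover have "Qf p W v = 0"
  proof -
    have "(\<Sum>i\<in>UNIV. \<Sum>j\<in>UNIV. v$i * W i j * v$j) = (\<Sum>i\<in>UNIV. v$i * (\<Sum>j\<in>UNIV. W i j * v$j))"
      by (simp add: sum_distrib_left mult.assoc)
    also have "\<dots> = (\<Sum>i\<in>UNIV. (v$i)^2 / p i)" using h by (simp add: power2_eq_square)
    finally show ?thesis by (simp add: Qf_def)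
  qed
  ultimately show False by simp
qed

lemma quad_bound:
  fixes W :: "'n::finite \<Rightarrow> 'n \<Rightarrow> real"
  assumes K: "\<And>i j. \<bar>W i j\<bar> \<le> K"
  shows "(\<Sum>i\<in>UNIV. \<Sum>j\<in>UNIV. v$i * W i j * v$j) \<le> K * real CARD('n) * (\<Sum>i\<in>UNIV. (v$i)^2)"
proof -
  have "v$i * W i j * v$j \<le> K * ((v$i)^2 + (v$j)^2) / 2" for i j
  proof -
    have "v$i * W i j * v$j \<le> \<bar>v$i * W i j * v$j\<bar>" by (rule abs_ge_self)
    also have "\<dots> = \<bar>W i j\<bar> * (\<bar>v$i\<bar> * \<bar>v$j\<bar>)" by (simp add: abs_mult)
    also have "\<dots> \<le> K * (\<bar>v$i\<bar> * \<bar>v$j\<bar>)" by (intro mult_right_mono K) auto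
    also have "\<dots> \<le> K * (((v$i)^2 + (v$j)^2) / 2)"
    proof -
      have "0 \<le> (\<bar>v$i\<bar> - \<bar>v$j\<bar>)^2" by simp
      then have "\<bar>v$i\<bar> * \<bar>v$j\<bar> \<le> ((v$i)^2 + (v$j)^2) / 2" by (simp add: power2_eq_square algebra_simps)
      moreover have "K \<ge> 0" using K[of i j] by linarith
      ultimately show ?thesis by (intro mult_left_mono) auto
    qed
    finally show ?thesis by simp
  qed
  then have "(\<Sum>i\<in>UNIV. \<Sum>j\<in>UNIV. v$i * W i j * v$j) \<le> (\<Sum>i\<in>UNIV. \<Sum>j\<in>UNIV. K * ((v$i)^2 + (v$j)^2) / 2)"
    by (intro sum_mono) auto
  also have "\<dots> = K * real CARD('n) * (\<Sum>i\<in>UNIV. (v$i)^2)"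
    by (simp add: sum.distrib sum_divide_distrib[symmetric] sum_distrib_left[symmetric] add_divide_distrib
        distrib_left sum.swap[of "\<lambda>i j. (v$j)^2"] algebra_simps)
  finally show ?thesis .
qed

lemma axis_nth1: "axis a (1::real) $ k = (if k = a then 1 else 0)"
  by (simp add: axis_def)

lemma sum_axis2: "(\<Sum>k\<in>UNIV. \<Sum>l\<in>UNIV. axis a (1::real) $ k * W k l * axis b 1 $ l) = W a b"
proof -
  have "(\<Sum>k\<in>UNIV. \<Sum>l\<in>UNIV. axis a (1::real) $ k * W k l * axis b 1 $ l)
      = (\<Sum>k\<in>UNIV. (if k = a then 1 else 0) * (\<Sum>l\<in>UNIV. W k l * (if l = b then 1 else 0)))"
    by (simp add: axis_nth1 sum_distrib_left mult.assoc)
  also have "\<dots> = (\<Sum>k\<in>UNIV. (if k = a then 1 else 0) * W k b)" by (simp only: sum_if_eq_mult')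
  also have "\<dots> = W a b" by (rule sum_if_eq_mult)
  finally show ?thesis .
qed

lemma sum_axis1: "(\<Sum>k\<in>UNIV. axis a (1::real) $ k * axis b 1 $ k / p k) = (if a = b then 1 / p a else 0)"
proof -
  have "(\<Sum>k\<in>UNIV. axis a (1::real) $ k * axis b 1 $ k / p k)
      = (\<Sum>k\<in>UNIV. (if k = a then 1 else 0) * ((if k = b then 1 else 0) / p k))"
    by (simp add: axis_nth1)
  also have "\<dots> = (if a = b then 1 else 0) / p a" by (rule sum_if_eq_mult)
  finally show ?thesis by simp
qed

lemma nq_axis: "nq p (axis a (1::real)) = 1 / p a"
  using sum_axis1[of a a p] by (simp add: nq_def power2_eq_square)

lemma Qf_two:
  assumes "i \<noteq> j"
  shows "Qf p W (axis i 1 + s *\<^sub>R axis j 1) = W i i + s * (W j i + W i j) + s^2 * W j j - 1 / p i - s^2 / p j"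
proof -
  have "fq W (axis i 1 + s *\<^sub>R axis j 1) = W i i + s * (W j i + W i j) + s^2 * W j j"
    unfolding fq_expand
    by (simp add: fq_def sum.distrib sum_axis2 power2_eq_square)
  moreover have "nq p (axis i 1 + s *\<^sub>R axis j 1) = 1 / p i + s^2 / p j"
    unfolding nq_expand nq_axis using assms sum_axis1[of j i p]
    by (simp add: power2_eq_square)
  ultimately show ?thesis by (simp add: Qf_def fq_def nq_def)
qed



lemma Upure_diff: "Upure u i True x - Upure u i False x = Dv u i x"
  by (simp add: Upure_def Dv_def)

lemma NE_box: "xs \<in> NE u \<Longrightarrow> 0 \<le> xs$i \<and> xs$i \<le> 1"
  by (simp add: NE_def simplex_prod_def)

lemma sum_split: "(\<Sum>j\<in>(UNIV::'n::finite set). f j) = (\<Sum>j\<in>M. f j) + (\<Sum>j\<in>-M. f j)"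
  using sum.subset_diff[of M "UNIV::'n set" f] by (simp add: Compl_eq_Diff_UNIV add.commute)

lemma W_le_K: "\<bar>Wm u i j xs\<bar> + 1 \<le> (\<Sum>i\<in>UNIV. \<Sum>j\<in>UNIV. \<bar>Wm u i j xs\<bar>) + 1"
proof -
  have "\<bar>Wm u i j xs\<bar> \<le> (\<Sum>j\<in>UNIV. \<bar>Wm u i j xs\<bar>)" by (rule member_le_sum) auto
  also have "\<dots> \<le> (\<Sum>i\<in>UNIV. \<Sum>j\<in>UNIV. \<bar>Wm u i j xs\<bar>)" by (rule member_le_sum[of i]) (auto intro: sum_nonneg)
  finally show ?thesis by simp
qed

lemma ev_Dv: "e > 0 \<Longrightarrow> eventually (\<lambda>x. \<forall>i. \<bar>Dv u i x - Dv u i xs\<bar> < e) (nhds xs)"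
  by (intro eventually_all_finite cont_ev) (auto intro!: continuous_intros)

lemma ev_Wm: "e > 0 \<Longrightarrow> eventually (\<lambda>x. \<forall>i j. \<bar>Wm u i j x - Wm u i j xs\<bar> < e) (nhds xs)"
proof -
  assume e: "e > 0"
  have "eventually (\<lambda>x. \<forall>j. \<bar>Wm u i j x - Wm u i j xs\<bar> < e) (nhds xs)" for i
    by (intro eventually_all_finite cont_ev e) (auto intro!: continuous_intros)
  then show ?thesis by (rule eventually_all_finite)
qed

lemma ev_x: fixes xs :: "real^'n::finite" shows "e > 0 \<Longrightarrow> eventually (\<lambda>x. \<forall>i. \<bar>x$i * (1 - x$i) - xs$i * (1 - xs$i)\<bar> < e) (nhds xs)"
proof -
  assume e: "e > 0"
  have c: "continuous_on UNIV (\<lambda>x::real^'n. x$i * (1 - x$i))" for i :: 'n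
    by (intro continuous_intros)
  have "eventually (\<lambda>x. \<bar>x$i * (1 - x$i) - xs$i * (1 - xs$i)\<bar> < e) (nhds xs)" for i
    using cont_ev[OF c e, of i xs] by simp
  then show ?thesis by (rule eventually_all_finite)
qed

lemma local_pure:
  fixes xs :: "real^'n::finite"
  assumes pure: "\<And>i. Dv u i xs \<noteq> 0"
  shows "\<exists>r>0. \<exists>l>0. \<forall>lam x. 0 < lam \<longrightarrow> lam < l \<longrightarrow> x \<in> ND u lam \<longrightarrow> dist x xs < r \<longrightarrow>
           (\<forall>v. v \<noteq> 0 \<longrightarrow> Qf (pp lam x) (\<lambda>i j. Wm u i j x) v < 0)"
proof -
  define \<delta> where "\<delta> = Min (range (\<lambda>i. \<bar>Dv u i xs\<bar>)) / 2"
  have \<delta>pos: "\<delta> > 0" unfolding \<delta>_def using pure by (simp add: Min_gr_iff)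
  have \<delta>le: "2 * \<delta> \<le> \<bar>Dv u i xs\<bar>" for i unfolding \<delta>_def by (simp add: Min_le)
  define K where "K = (\<Sum>i\<in>UNIV. \<Sum>j\<in>UNIV. \<bar>Wm u i j xs\<bar>) + 1"
  have K1: "K \<ge> 1" unfolding K_def by (simp add: sum_nonneg)
  define N where "N = real CARD('n)"
  have N1: "N \<ge> 1" unfolding N_def by simp
  have "eventually (\<lambda>x. (\<forall>i. \<bar>Dv u i x - Dv u i xs\<bar> < \<delta>) \<and> (\<forall>i j. \<bar>Wm u i j x - Wm u i j xs\<bar> < 1)) (nhds xs)"
    by (intro eventually_conj ev_Dv ev_Wm \<delta>pos) simp
  then obtain r where r: "r > 0" and rP: "\<And>x. dist x xs < r \<Longrightarrow>
      (\<forall>i. \<bar>Dv u i x - Dv u i xs\<bar> < \<delta>) \<and> (\<forall>i j. \<bar>Wm u i j x - Wm u i j xs\<bar> < 1)"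
    unfolding eventually_nhds_metric by blast
  define l where "l = \<delta>^2 / (4 * K * N)"
  have lpos: "l > 0" using \<delta>pos K1 N1 by (simp add: l_def)
  have "\<forall>lam x. 0 < lam \<longrightarrow> lam < l \<longrightarrow> x \<in> ND u lam \<longrightarrow> dist x xs < r \<longrightarrow>
           (\<forall>v. v \<noteq> 0 \<longrightarrow> Qf (pp lam x) (\<lambda>i j. Wm u i j x) v < 0)"
  proof (intro allI impI)
    fix lam x v assume lam: "0 < lam" "lam < l" and xND: "x \<in> ND u lam" and dx: "dist x xs < r" and v: "v \<noteq> (0::real^'n)"
    have Dx: "\<bar>Dv u i x\<bar> \<ge> \<delta>" for i
    proof -
      have "\<bar>Dv u i x - Dv u i xs\<bar> < \<delta>" using rP[OF dx] by blast
      then show ?thesis using \<delta>le[of i] by arith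
    qed
    have Wx: "\<bar>Wm u i j x\<bar> \<le> K" for i j
    proof -
      have "\<bar>Wm u i j x - Wm u i j xs\<bar> < 1" using rP[OF dx] by blast
      then show ?thesis using W_le_K[of u i j xs] unfolding K_def by arith
    qed
    have big: "(v$i)^2 / pp lam x i \<ge> \<delta>^2 / (4 * lam) * (v$i)^2" for i
    proof -
      have "lam / (x$i * (1 - x$i)) \<ge> \<delta>^2 / (4 * lam)"
        by (rule inv_p_big[OF lam(1) ND_nth[OF xND lam(1)] Dx \<delta>pos])
      moreover have "(v$i)^2 / pp lam x i = (v$i)^2 * (lam / (x$i * (1 - x$i)))"
        by (simp add: pp_def)
      ultimately show ?thesis
        using mult_right_mono[of "\<delta>^2 / (4 * lam)" "lam / (x$i * (1 - x$i))" "(v$i)^2"] by (simp add: mult.commute)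
    qed
    have S: "(\<Sum>i\<in>UNIV. (v$i)^2) > 0"
    proof -
      obtain k where "v$k \<noteq> 0" using v by (auto simp: vec_eq_iff)
      then have "(v$k)^2 > 0" by simp
      moreover have "(v$k)^2 \<le> (\<Sum>i\<in>UNIV. (v$i)^2)" by (rule member_le_sum) auto
      ultimately show ?thesis by linarith
    qed
    have fq: "(\<Sum>i\<in>UNIV. \<Sum>j\<in>UNIV. v$i * Wm u i j x * v$j) \<le> K * N * (\<Sum>i\<in>UNIV. (v$i)^2)"
      unfolding N_def by (rule quad_bound) (rule Wx)
    have nq: "(\<Sum>i\<in>UNIV. (v$i)^2 / pp lam x i) \<ge> \<delta>^2 / (4 * lam) * (\<Sum>i\<in>UNIV. (v$i)^2)"
      unfolding sum_distrib_left by (intro sum_mono big)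
    have "K * N < \<delta>^2 / (4 * lam)"
    proof -
      have "lam * (4 * K * N) < \<delta>^2" using lam K1 N1 unfolding l_def by (simp add: field_simps)
      then show ?thesis using lam by (simp add: field_simps)
    qed
    then have "K * N * (\<Sum>i\<in>UNIV. (v$i)^2) < \<delta>^2 / (4 * lam) * (\<Sum>i\<in>UNIV. (v$i)^2)"
      using S by (intro mult_strict_right_mono)
    then show "Qf (pp lam x) (\<lambda>i j. Wm u i j x) v < 0"
      unfolding Qf_def using fq nq by linarith
  qed
  then show ?thesis using r lpos by blast
qed



lemma abs_sum_le_K:
  fixes a v :: "'a \<Rightarrow> real"
  assumes "\<And>j. j \<in> S \<Longrightarrow> \<bar>a j\<bar> \<le> K"
  shows "\<bar>\<Sum>j\<in>S. a j * v j\<bar> \<le> K * (\<Sum>j\<in>S. \<bar>v j\<bar>)"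
proof -
  have "\<bar>\<Sum>j\<in>S. a j * v j\<bar> \<le> (\<Sum>j\<in>S. \<bar>a j * v j\<bar>)" by (rule sum_abs)
  also have "\<dots> \<le> (\<Sum>j\<in>S. K * \<bar>v j\<bar>)"
    by (intro sum_mono) (auto simp: abs_mult intro!: mult_right_mono assms)
  finally show ?thesis by (simp add: sum_distrib_left)
qed

lemma local_mixed:
  fixes xs :: "real^'n::finite"
  defines "M \<equiv> mixing_players xs"
  assumes box: "\<And>i. 0 \<le> xs$i \<and> xs$i \<le> 1"
    and qs: "\<And>i. i \<notin> M \<Longrightarrow> Dv u i xs \<noteq> 0"
    and Mne: "M \<noteq> {}"
    and inv: "invertible_on M (\<lambda>i j. Wm u i j xs)"
  shows "\<exists>r>0. \<exists>l>0. \<forall>lam x. 0 < lam \<longrightarrow> lam < l \<longrightarrow> x \<in> ND u lam \<longrightarrow> dist x xs < r \<longrightarrow>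
     (\<forall>v. (\<forall>i. (\<Sum>j\<in>UNIV. Wm u i j x * v$j) = v$i / pp lam x i) \<longrightarrow> v = 0) \<and>
     (\<exists>v. v \<noteq> 0 \<and> Qf (pp lam x) (\<lambda>i j. Wm u i j x) v \<ge> 0)"
proof -
  obtain B where HB: "\<And>i j. i \<in> M \<Longrightarrow> j \<in> M \<Longrightarrow> (\<Sum>k\<in>M. Wm u i k xs * B k j) = (if i = j then 1 else 0)"
    and BH: "\<And>i j. i \<in> M \<Longrightarrow> j \<in> M \<Longrightarrow> (\<Sum>k\<in>M. B i k * Wm u k j xs) = (if i = j then 1 else 0)"
    using inv unfolding invertible_on_def by blast
  obtain i0 j0 where i0: "i0 \<in> M" and j0: "j0 \<in> M" and W0: "Wm u i0 j0 xs \<noteq> 0"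
  proof -
    obtain k where k: "k \<in> M" using Mne by blast
    have "(\<Sum>k'\<in>M. Wm u k k' xs * B k' k) = 1" using HB[OF k k] by simp
    then obtain k' where "k' \<in> M" "Wm u k k' xs \<noteq> 0"
    proof -
      assume s1: "(\<Sum>k'\<in>M. Wm u k k' xs * B k' k) = 1"
        and th: "\<And>k'. k' \<in> M \<Longrightarrow> Wm u k k' xs \<noteq> 0 \<Longrightarrow> thesis"
      show thesis
      proof (rule ccontr)
        assume "\<not> thesis"
        then have "\<forall>k'\<in>M. Wm u k k' xs = 0" using th by blast
        then have "(\<Sum>k'\<in>M. Wm u k k' xs * B k' k) = 0" by simp
        then show False using s1 by simp
      qed
    qed
    then show ?thesis using that k by blast
  qed
  have ij0: "i0 \<noteq> j0" using W0 by auto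
  define w0 where "w0 = \<bar>Wm u i0 j0 xs\<bar>"
  have w0pos: "w0 > 0" using W0 by (simp add: w0_def)
  define \<delta> where "\<delta> = Min (insert 1 ((\<lambda>i. \<bar>Dv u i xs\<bar>) ` (-M))) / 2"
  have \<delta>pos: "\<delta> > 0" unfolding \<delta>_def using qs by (simp add: Min_gr_iff)
  have \<delta>le: "2 * \<delta> \<le> \<bar>Dv u i xs\<bar>" if "i \<notin> M" for i unfolding \<delta>_def using that by (simp add: Min_le)
  have xsM: "0 < xs$i * (1 - xs$i)" if "i \<in> M" for i using that by (simp add: M_def mixing_players_def)
  define c0 where "c0 = Min ((\<lambda>i. xs$i * (1 - xs$i)) ` M) / 2"
  have c0pos: "c0 > 0" unfolding c0_def using Mne xsM by (simp add: Min_gr_iff)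
  have c0le: "2 * c0 \<le> xs$i * (1 - xs$i)" if "i \<in> M" for i unfolding c0_def using that by (simp add: Min_le)
  define K where "K = (\<Sum>i\<in>UNIV. \<Sum>j\<in>UNIV. \<bar>Wm u i j xs\<bar>) + 1"
  have K1: "K \<ge> 1" unfolding K_def by (simp add: sum_nonneg)
  define N where "N = real CARD('n)"
  have N1: "N \<ge> 1" unfolding N_def by simp
  define Bs where "Bs = (\<Sum>l\<in>M. \<Sum>i\<in>M. \<bar>B l i\<bar>)"
  have Bs0: "Bs \<ge> 0" unfolding Bs_def by (simp add: sum_nonneg)
  define g where "g = 1 / (6 * (Bs + 1))"
  have gpos: "g > 0" and g6: "g \<le> 1/6" and gBs: "3 * g * Bs \<le> 1/2"
    using Bs0 by (auto simp: g_def field_simps)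
  define \<eta> where "\<eta> = min (w0 / 2) g"
  have \<eta>pos: "\<eta> > 0" using w0pos gpos by (simp add: \<eta>_def)
  have "eventually (\<lambda>x. (\<forall>i. \<bar>Dv u i x - Dv u i xs\<bar> < \<delta>) \<and> (\<forall>i j. \<bar>Wm u i j x - Wm u i j xs\<bar> < \<eta>)
      \<and> (\<forall>i. \<bar>x$i * (1 - x$i) - xs$i * (1 - xs$i)\<bar> < c0)) (nhds xs)"
    by (intro eventually_conj ev_Dv ev_Wm ev_x \<delta>pos \<eta>pos c0pos)
  then obtain r where r: "r > 0" and rP: "\<And>x. dist x xs < r \<Longrightarrow>
      (\<forall>i. \<bar>Dv u i x - Dv u i xs\<bar> < \<delta>) \<and> (\<forall>i j. \<bar>Wm u i j x - Wm u i j xs\<bar> < \<eta>)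
      \<and> (\<forall>i. \<bar>x$i * (1 - x$i) - xs$i * (1 - xs$i)\<bar> < c0)"
    unfolding eventually_nhds_metric by blast
  define l where "l = min (w0 * c0 / 2) (min (c0 * g) (\<delta>^2 * g / (8 * N * K^2)))"
  have lpos: "l > 0" using w0pos c0pos gpos \<delta>pos K1 N1 by (simp add: l_def)
  have main: "\<forall>lam x. 0 < lam \<longrightarrow> lam < l \<longrightarrow> x \<in> ND u lam \<longrightarrow> dist x xs < r \<longrightarrow>
     (\<forall>v. (\<forall>i. (\<Sum>j\<in>UNIV. Wm u i j x * v$j) = v$i / pp lam x i) \<longrightarrow> v = 0) \<and>
     (\<exists>v. v \<noteq> 0 \<and> Qf (pp lam x) (\<lambda>i j. Wm u i j x) v \<ge> 0)"
  proof (intro allI impI)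
    fix lam x assume lam: "0 < lam" "lam < l" and xND: "x \<in> ND u lam" and dx: "dist x xs < r"
    have Dx: "\<bar>Dv u i x\<bar> \<ge> \<delta>" if "i \<notin> M" for i
    proof -
      have "\<bar>Dv u i x - Dv u i xs\<bar> < \<delta>" using rP[OF dx] by blast
      then show ?thesis using \<delta>le[OF that] by arith
    qed
    have Wd: "\<bar>Wm u i j x - Wm u i j xs\<bar> < \<eta>" for i j using rP[OF dx] by blast
    have Wx: "\<bar>Wm u i j x\<bar> \<le> K" for i j
    proof -
      have "\<eta> \<le> 1" using g6 by (simp add: \<eta>_def)
      then show ?thesis using Wd[of i j] W_le_K[of u i j xs] unfolding K_def by arith
    qed
    have cx: "x$i * (1 - x$i) \<ge> c0" if "i \<in> M" for i
    proof -
      have "\<bar>x$i * (1 - x$i) - xs$i * (1 - xs$i)\<bar> < c0" using rP[OF dx] by blast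
      then show ?thesis using c0le[OF that] by arith
    qed
    define q where "q i = lam / (x$i * (1 - x$i))" for i
    have q0: "q i \<ge> 0" for i using ND_open01[OF xND lam(1), of i] lam by (simp add: q_def)
    have qdiv: "v$i / pp lam x i = v$i * q i" for v :: "real^'n" and i by (simp add: q_def pp_def)
    have qM: "q i \<le> lam / c0" if "i \<in> M" for i
      unfolding q_def using cx[OF that] c0pos lam by (intro divide_left_mono) auto
    have lamc0: "lam / c0 \<le> g" using lam c0pos unfolding l_def by (simp add: field_simps)
    have Big: "q i \<ge> \<delta>^2 / (4 * lam)" if "i \<notin> M" for i
      unfolding q_def by (rule inv_p_big[OF lam(1) ND_nth[OF xND lam(1)] Dx[OF that] \<delta>pos])
    have Big2: "\<delta>^2 / (4 * lam) \<ge> 2 * N * K^2 / g"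
    proof -
      have "lam \<le> \<delta>^2 * g / (8 * N * K^2)" using lam(2) unfolding l_def by simp
      then have "lam * (8 * N * K^2) \<le> \<delta>^2 * g" using N1 K1 by (simp add: field_simps)
      then show ?thesis using lam gpos by (simp add: field_simps)
    qed
    have HH: "\<forall>v. (\<forall>i. (\<Sum>j\<in>UNIV. Wm u i j x * v$j) = v$i / pp lam x i) \<longrightarrow> v = 0"
    proof (intro allI impI)
      fix v :: "real^'n" assume hv: "\<forall>i. (\<Sum>j\<in>UNIV. Wm u i j x * v$j) = v$i / pp lam x i"
      then have hv': "(\<Sum>j\<in>UNIV. Wm u i j x * v$j) = v$i * q i" for i by (simp add: qdiv)
      define \<alpha> where "\<alpha> = (\<Sum>i\<in>M. \<bar>v$i\<bar>)"
      define \<beta> where "\<beta> = (\<Sum>i\<in>-M. \<bar>v$i\<bar>)"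
      have \<alpha>0: "\<alpha> \<ge> 0" and \<beta>0: "\<beta> \<ge> 0" by (simp_all add: \<alpha>_def \<beta>_def sum_nonneg)
      have rowb: "\<bar>\<Sum>j\<in>UNIV. Wm u i j x * v$j\<bar> \<le> K * (\<alpha> + \<beta>)" for i
      proof -
        have "\<bar>\<Sum>j\<in>UNIV. Wm u i j x * v$j\<bar> \<le> K * (\<Sum>j\<in>UNIV. \<bar>v$j\<bar>)" by (rule abs_sum_le_K) (rule Wx)
        also have "(\<Sum>j\<in>UNIV. \<bar>v$j\<bar>) = \<alpha> + \<beta>" unfolding \<alpha>_def \<beta>_def by (rule sum_split)
        finally show ?thesis .
      qed
      have \<beta>b: "K * \<beta> \<le> g * \<alpha>"
      proof -
        have vi: "\<bar>v$i\<bar> * (2 * N * K^2 / g) \<le> K * (\<alpha> + \<beta>)" if "i \<notin> M" for i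
        proof -
          have "\<bar>v$i\<bar> * (2 * N * K^2 / g) \<le> \<bar>v$i\<bar> * q i"
            using Big[OF that] Big2 by (intro mult_left_mono) auto
          also have "\<dots> = \<bar>\<Sum>j\<in>UNIV. Wm u i j x * v$j\<bar>" using hv'[of i] q0[of i] by (simp add: abs_mult)
          also have "\<dots> \<le> K * (\<alpha> + \<beta>)" by (rule rowb)
          finally show ?thesis .
        qed
        have "\<beta> * (2 * N * K^2 / g) = (\<Sum>i\<in>-M. \<bar>v$i\<bar> * (2 * N * K^2 / g))"
          unfolding \<beta>_def by (simp add: sum_distrib_right sum_divide_distrib)
        also have "\<dots> \<le> (\<Sum>i\<in>-M. K * (\<alpha> + \<beta>))"
          by (intro sum_mono vi) auto
        finally have "\<beta> * (2 * N * K^2 / g) \<le> (\<Sum>i\<in>-M. K * (\<alpha> + \<beta>))" .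
        also have "\<dots> = real (card (-M)) * (K * (\<alpha> + \<beta>))" by simp
        also have "\<dots> \<le> N * (K * (\<alpha> + \<beta>))"
          unfolding N_def using K1 \<alpha>0 \<beta>0 by (intro mult_right_mono) (auto simp: card_mono)
        finally have prevb: "\<beta> * (2 * N * K^2 / g) \<le> N * (K * (\<alpha> + \<beta>))" .
        have "(N * K) * (\<beta> * (2 * K / g)) = \<beta> * (2 * N * K^2 / g)"
          by (simp add: power2_eq_square divide_inverse ac_simps)
        also have "\<dots> \<le> N * (K * (\<alpha> + \<beta>))" by (rule prevb)
        also have "\<dots> = (N * K) * (\<alpha> + \<beta>)" by simp
        finally have "(N * K) * (\<beta> * (2 * K / g)) \<le> (N * K) * (\<alpha> + \<beta>)" .
        moreover have "N * K > 0" using N1 K1 by simp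
        ultimately have "\<beta> * (2 * K / g) \<le> \<alpha> + \<beta>"
          by (rule mult_left_le_imp_le)
        moreover have "2 * K / g \<ge> K / g + 1"
        proof -
          have "K / g \<ge> 1" using K1 gpos g6 by (simp add: field_simps)
          then show ?thesis by simp
        qed
        ultimately have "\<beta> * (K / g + 1) \<le> \<alpha> + \<beta>"
        proof -
          assume a1: "\<beta> * (2 * K / g) \<le> \<alpha> + \<beta>" and a2: "2 * K / g \<ge> K / g + 1"
          have "\<beta> * (K / g + 1) \<le> \<beta> * (2 * K / g)" using a2 \<beta>0 by (rule mult_left_mono)
          then show ?thesis using a1 by linarith
        qed
        then have "\<beta> * (K / g) \<le> \<alpha>" by (simp add: algebra_simps)
        then show ?thesis using gpos by (simp add: field_simps)
      qed
      define y where "y i = (\<Sum>j\<in>M. Wm u i j xs * v$j)" for i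
      have yb: "\<bar>y i\<bar> \<le> 3 * g * \<alpha>" if iM: "i \<in> M" for i
      proof -
        have sp: "(\<Sum>j\<in>UNIV. Wm u i j x * v$j) = (\<Sum>j\<in>M. Wm u i j x * v$j) + (\<Sum>j\<in>-M. Wm u i j x * v$j)"
          by (rule sum_split)
        have "y i = v$i * q i - (\<Sum>j\<in>-M. Wm u i j x * v$j) - (\<Sum>j\<in>M. (Wm u i j x - Wm u i j xs) * v$j)"
          using sp hv'[of i] by (simp add: y_def algebra_simps sum_subtractf)
        moreover have "\<bar>v$i * q i\<bar> \<le> g * \<alpha>"
        proof -
          have "\<bar>v$i\<bar> \<le> \<alpha>" unfolding \<alpha>_def using iM by (intro member_le_sum) auto
          moreover have "q i \<le> g" using qM[OF iM] lamc0 by simp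
          ultimately have "\<bar>v$i\<bar> * q i \<le> \<alpha> * g" using q0[of i] gpos by (intro mult_mono) auto
          then show ?thesis using q0[of i] by (simp add: abs_mult mult.commute)
        qed
        moreover have "\<bar>\<Sum>j\<in>-M. Wm u i j x * v$j\<bar> \<le> g * \<alpha>"
          using abs_sum_le_K[of "-M" "\<lambda>j. Wm u i j x" K "\<lambda>j. v$j"] Wx \<beta>b unfolding \<beta>_def by force
        moreover have "\<bar>\<Sum>j\<in>M. (Wm u i j x - Wm u i j xs) * v$j\<bar> \<le> g * \<alpha>"
        proof -
          have "\<bar>\<Sum>j\<in>M. (Wm u i j x - Wm u i j xs) * v$j\<bar> \<le> \<eta> * \<alpha>"
            unfolding \<alpha>_def using Wd by (intro abs_sum_le_K) (simp add: less_imp_le)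
          also have "\<dots> \<le> g * \<alpha>" using \<alpha>0 by (intro mult_right_mono) (auto simp: \<eta>_def)
          finally show ?thesis .
        qed
        ultimately show ?thesis by arith
      qed
      have vl: "v$l = (\<Sum>i\<in>M. B l i * y i)" if lM: "l \<in> M" for l
      proof -
        have "(\<Sum>i\<in>M. B l i * y i) = (\<Sum>i\<in>M. \<Sum>j\<in>M. B l i * Wm u i j xs * v$j)"
          by (simp add: y_def sum_distrib_left mult.assoc)
        also have "\<dots> = (\<Sum>j\<in>M. (\<Sum>i\<in>M. B l i * Wm u i j xs) * v$j)"
          by (subst sum.swap) (simp add: sum_distrib_right)
        also have "\<dots> = (\<Sum>j\<in>M. (if l = j then 1 else 0) * v$j)"
          using BH[OF lM] by (intro sum.cong) auto
        also have "\<dots> = (\<Sum>j\<in>M. if l = j then v$j else 0)" by (intro sum.cong) auto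
        also have "\<dots> = v$l" using lM by simp
        finally show ?thesis by simp
      qed
      have "(\<Sum>l\<in>M. \<bar>v$l\<bar>) \<le> (\<Sum>l\<in>M. (\<Sum>i\<in>M. \<bar>B l i\<bar>) * (3 * g * \<alpha>))"
      proof (rule sum_mono)
        fix l assume lM: "l \<in> M"
        have "\<bar>v$l\<bar> \<le> (\<Sum>i\<in>M. \<bar>B l i * y i\<bar>)" unfolding vl[OF lM] by (rule sum_abs)
        also have "\<dots> \<le> (\<Sum>i\<in>M. \<bar>B l i\<bar> * (3 * g * \<alpha>))"
          by (intro sum_mono) (auto simp: abs_mult intro!: mult_left_mono yb)
        finally show "\<bar>v$l\<bar> \<le> (\<Sum>i\<in>M. \<bar>B l i\<bar>) * (3 * g * \<alpha>)" by (simp add: sum_distrib_right)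
      qed
      then have "\<alpha> \<le> (\<Sum>l\<in>M. (\<Sum>i\<in>M. \<bar>B l i\<bar>) * (3 * g * \<alpha>))" by (simp add: \<alpha>_def)
      also have "\<dots> = (3 * g * Bs) * \<alpha>" unfolding Bs_def by (simp add: sum_distrib_left sum_distrib_right ac_simps)
      also have "\<dots> \<le> (1/2) * \<alpha>" using gBs \<alpha>0 by (intro mult_right_mono) auto
      finally have "\<alpha> = 0" using \<alpha>0 by simp
      then have "K * \<beta> \<le> 0" using \<beta>b by simp
      moreover have "\<beta> \<le> K * \<beta>" using K1 \<beta>0 by (simp add: mult_le_cancel_right1)
      ultimately have "\<beta> = 0" using \<beta>0 by linarith
      have "\<forall>i\<in>M. \<bar>v$i\<bar> = 0" using \<open>\<alpha> = 0\<close> unfolding \<alpha>_def by (subst (asm) sum_nonneg_eq_0_iff) auto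
      moreover have "\<forall>i\<in>-M. \<bar>v$i\<bar> = 0" using \<open>\<beta> = 0\<close> unfolding \<beta>_def by (subst (asm) sum_nonneg_eq_0_iff) auto
      ultimately show "v = 0" by (auto simp: vec_eq_iff)
    qed
    have EE: "\<exists>v. v \<noteq> 0 \<and> Qf (pp lam x) (\<lambda>i j. Wm u i j x) v \<ge> 0"
    proof -
      define a where "a = Wm u i0 j0 x"
      have "\<bar>a\<bar> \<ge> w0 / 2" using Wd[of i0 j0] unfolding a_def w0_def \<eta>_def by arith
      then have a0: "a \<noteq> 0" using w0pos by auto
      define s where "s = sgn a"
      have s2: "s^2 = 1" using a0 by (simp add: s_def power2_eq_square sgn_if)
      have sa: "s * a = \<bar>a\<bar>" by (simp add: s_def sgn_mult_abs abs_sgn)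
      define v :: "real^'n" where "v = axis i0 1 + s *\<^sub>R axis j0 1"
      have "v $ i0 = 1" using ij0 by (simp add: v_def axis_def)
      then have v0: "v \<noteq> 0" by auto
      have "Qf (pp lam x) (\<lambda>i j. Wm u i j x) v = 2 * \<bar>a\<bar> - 1 / pp lam x i0 - 1 / pp lam x j0"
        unfolding v_def Qf_two[OF ij0] using s2 sa
        by (simp add: Wm_sym[of u j0 i0] a_def algebra_simps)
      also have "1 / pp lam x i0 = q i0" by (simp add: q_def pp_def)
      also have "1 / pp lam x j0 = q j0" by (simp add: q_def pp_def)
      finally have Qe: "Qf (pp lam x) (\<lambda>i j. Wm u i j x) v = 2 * \<bar>a\<bar> - q i0 - q j0" .
      have "q i0 + q j0 \<le> 2 * (lam / c0)" using qM[OF i0] qM[OF j0] by simp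
      also have "\<dots> \<le> w0" using lam c0pos unfolding l_def by (simp add: field_simps)
      finally have "Qf (pp lam x) (\<lambda>i j. Wm u i j x) v \<ge> 0" using Qe \<open>\<bar>a\<bar> \<ge> w0 / 2\<close> by linarith
      then show ?thesis using v0 by blast
    qed
    show "(\<forall>v. (\<forall>i. (\<Sum>j\<in>UNIV. Wm u i j x * v$j) = v$i / pp lam x i) \<longrightarrow> v = 0) \<and>
     (\<exists>v. v \<noteq> 0 \<and> Qf (pp lam x) (\<lambda>i j. Wm u i j x) v \<ge> 0)" using HH EE by blast
  qed
  then show ?thesis using r lpos by blast
qed



lemma NE_qs_Dv:
  assumes reg: "regular_NE u xs" and i: "i \<notin> mixing_players xs"
  shows "Dv u i xs \<noteq> 0"
proof -
  have box: "0 \<le> xs$i \<and> xs$i \<le> 1" using reg NE_box unfolding regular_NE_def by blast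
  then have "xs$i = 0 \<or> xs$i = 1" using i by (auto simp: mixing_players_def)
  moreover have "quasi_strict u xs" using reg by (simp add: regular_NE_def)
  ultimately show ?thesis unfolding quasi_strict_def Upure_diff[symmetric] by force
qed

lemma local_analysis:
  fixes xs :: "real^'n::finite"
  assumes reg: "regular_NE u xs"
  shows "\<exists>r>0. \<exists>l>0. \<forall>lam x. 0 < lam \<longrightarrow> lam < l \<longrightarrow> x \<in> ND u lam \<longrightarrow> dist x xs < r \<longrightarrow>
     hyperbolic_pt (sbr_field u lam) x \<and> (linearly_stable (sbr_field u lam) x \<longleftrightarrow> pure_profile xs)"
proof -
  define M where "M = mixing_players xs"
  have box: "\<And>i. 0 \<le> xs$i \<and> xs$i \<le> 1" using reg NE_box unfolding regular_NE_def by blast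
  have qs: "\<And>i. i \<notin> M \<Longrightarrow> Dv u i xs \<noteq> 0" using NE_qs_Dv[OF reg] by (simp add: M_def)
  have hessW: "hess u xs = (\<lambda>i j. Wm u i j xs)" by (simp add: fun_eq_iff hess_eq)
  have inv: "invertible_on M (\<lambda>i j. Wm u i j xs)"
    using reg unfolding regular_NE_def hessW M_def by blast
  have JJ: "jacobian (sbr_field u lam) (at x) = Jm (pp lam x) (\<lambda>i j. Wm u i j x)"
    if "x \<in> ND u lam" "lam > 0" for x lam by (rule jacobian_ND[OF that])
  show ?thesis
  proof (cases "M = {}")
    case True
    have "xs$i = 0 \<or> xs$i = 1" for i
    proof -
      have "i \<notin> M" using True by blast
      then have "\<not> (0 < xs$i \<and> xs$i < 1)" by (simp add: M_def mixing_players_def)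
      then show ?thesis using box[of i] by linarith
    qed
    then have pure: "pure_profile xs" by (simp add: pure_profile_def)
    have "\<And>i. Dv u i xs \<noteq> 0" using qs True by blast
    from local_pure[OF this] obtain r l where r: "r > 0" and l: "l > 0" and
      P: "\<forall>lam x. 0 < lam \<longrightarrow> lam < l \<longrightarrow> x \<in> ND u lam \<longrightarrow> dist x xs < r \<longrightarrow>
           (\<forall>v. v \<noteq> 0 \<longrightarrow> Qf (pp lam x) (\<lambda>i j. Wm u i j x) v < 0)" by blast
    have "\<forall>lam x. 0 < lam \<longrightarrow> lam < l \<longrightarrow> x \<in> ND u lam \<longrightarrow> dist x xs < r \<longrightarrow>
     hyperbolic_pt (sbr_field u lam) x \<and> (linearly_stable (sbr_field u lam) x \<longleftrightarrow> pure_profile xs)"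
    proof (intro allI impI)
      fix lam x assume lam: "0 < lam" "lam < l" and xND: "x \<in> ND u lam" and dx: "dist x xs < r"
      have Q: "\<And>v. v \<noteq> 0 \<Longrightarrow> Qf (pp lam x) (\<lambda>i j. Wm u i j x) v < 0" using P lam xND dx by blast
      have h1: "hyperbolic_pt (sbr_field u lam) x"
        unfolding hyperbolic_pt_def JJ[OF xND lam(1)]
        by (rule genH[OF pp_pos[OF xND lam(1)]]) (rule negdef_H[OF Q], blast)
      have h2: "linearly_stable (sbr_field u lam) x = pure_profile xs"
        unfolding linearly_stable_def JJ[OF xND lam(1)] using pure
        by (auto intro: genA[OF pp_pos[OF xND lam(1)] Q])
      show "hyperbolic_pt (sbr_field u lam) x \<and> (linearly_stable (sbr_field u lam) x \<longleftrightarrow> pure_profile xs)"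
        using h1 h2 by blast
    qed
    then show ?thesis using r l by blast
  next
    case False
    obtain i where iM: "i \<in> M" using False by blast
    then have "xs$i \<noteq> 0 \<and> xs$i \<noteq> 1" by (auto simp: M_def mixing_players_def)
    then have notpure: "\<not> pure_profile xs" unfolding pure_profile_def by blast
    from local_mixed[OF box qs[unfolded M_def] False[unfolded M_def] inv[unfolded M_def]]
    obtain r l where r: "r > 0" and l: "l > 0" and
      P: "\<forall>lam x. 0 < lam \<longrightarrow> lam < l \<longrightarrow> x \<in> ND u lam \<longrightarrow> dist x xs < r \<longrightarrow>
     (\<forall>v. (\<forall>i. (\<Sum>j\<in>UNIV. Wm u i j x * v$j) = v$i / pp lam x i) \<longrightarrow> v = 0) \<and>
     (\<exists>v. v \<noteq> 0 \<and> Qf (pp lam x) (\<lambda>i j. Wm u i j x) v \<ge> 0)" by blast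
    have "\<forall>lam x. 0 < lam \<longrightarrow> lam < l \<longrightarrow> x \<in> ND u lam \<longrightarrow> dist x xs < r \<longrightarrow>
     hyperbolic_pt (sbr_field u lam) x \<and> (linearly_stable (sbr_field u lam) x \<longleftrightarrow> pure_profile xs)"
    proof (intro allI impI)
      fix lam x assume lam: "0 < lam" "lam < l" and xND: "x \<in> ND u lam" and dx: "dist x xs < r"
      have H: "\<And>v. (\<forall>i. (\<Sum>j\<in>UNIV. Wm u i j x * v$j) = v$i / pp lam x i) \<Longrightarrow> v = 0"
        and E: "\<exists>v. v \<noteq> 0 \<and> Qf (pp lam x) (\<lambda>i j. Wm u i j x) v \<ge> 0" using P lam xND dx by blast+
      have h1: "hyperbolic_pt (sbr_field u lam) x"
        unfolding hyperbolic_pt_def JJ[OF xND lam(1)]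
        by (rule genH[OF pp_pos[OF xND lam(1)] H])
      from E obtain v where v: "v \<noteq> 0" "Qf (pp lam x) (\<lambda>i j. Wm u i j x) v \<ge> 0" by blast
      obtain mu where "complex_eigenvalue (Jm (pp lam x) (\<lambda>i j. Wm u i j x)) mu" "Re mu \<ge> 0"
        using genB[OF pp_pos[OF xND lam(1)] Wm_sym v] by blast
      then have "\<not> linearly_stable (sbr_field u lam) x"
        unfolding linearly_stable_def JJ[OF xND lam(1)] by force
      then have h2: "linearly_stable (sbr_field u lam) x = pure_profile xs" using notpure by simp
      show "hyperbolic_pt (sbr_field u lam) x \<and> (linearly_stable (sbr_field u lam) x \<longleftrightarrow> pure_profile xs)"
        using h1 h2 by blast
    qed
    then show ?thesis using r l by blast
  qed
qed



lemma closed_simplex: "closed (simplex_prod :: (real^'n::finite) set)"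
proof -
  have e: "simplex_prod = (\<Inter>i. {x::real^'n. 0 \<le> x$i} \<inter> {x. x$i \<le> 1})"
    by (auto simp: simplex_prod_def)
  have c: "closed ({x::real^'n. 0 \<le> x$i} \<inter> {x. x$i \<le> 1})" for i
    by (intro closed_Int closed_Collect_le continuous_intros)
  show ?thesis unfolding e by (rule closed_INT) (simp add: c)
qed

lemma convex_simplex: "convex (simplex_prod :: (real^'n::finite) set)"
  unfolding simplex_prod_def convex_def
proof (intro ballI allI impI, safe)
  fix x y :: "real^'n" and u v :: real and i
  assume x: "\<forall>i. 0 \<le> x$i \<and> x$i \<le> 1" and y: "\<forall>i. 0 \<le> y$i \<and> y$i \<le> 1" and uv: "0 \<le> u" "0 \<le> v" "u + v = 1"
  show "0 \<le> (u *\<^sub>R x + v *\<^sub>R y) $ i" using x y uv by simp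
  have "u * x$i + v * y$i \<le> u * 1 + v * 1" using x y uv by (intro add_mono mult_left_mono) auto
  then show "(u *\<^sub>R x + v *\<^sub>R y) $ i \<le> 1" using uv by simp
qed

lemma Dv_mvt:
  fixes z z' :: "real^'n::finite"
  shows "\<exists>t. 0 \<le> t \<and> t \<le> 1 \<and>
    Dv u i z - Dv u i z' = (\<Sum>j\<in>UNIV. Wm u i j (z' + t *\<^sub>R (z - z')) * (z - z')$j)"
proof -
  define f where "f t = Dv u i (z' + t *\<^sub>R (z - z'))" for t :: real
  have d: "(f has_derivative (\<lambda>h. \<Sum>j\<in>UNIV. Wm u i j (z' + t *\<^sub>R (z - z')) * (h *\<^sub>R (z - z'))$j)) (at t within {0..1})" for t
  proof -
    have "((\<lambda>t. z' + t *\<^sub>R (z - z')) has_derivative (\<lambda>h. h *\<^sub>R (z - z'))) (at t within {0..1})"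
      by (auto intro!: derivative_eq_intros)
    from has_derivative_compose[OF this has_derivative_at_withinI[OF Dv_has_derivative]]
    show ?thesis unfolding f_def by (simp add: o_def)
  qed
  from mvt_simple[OF zero_less_one d] obtain t where t: "t \<in> {0<..<1}"
    and e: "f 1 - f 0 = (\<Sum>j\<in>UNIV. Wm u i j (z' + t *\<^sub>R (z - z')) * ((1 - 0) *\<^sub>R (z - z'))$j)"
    by blast
  show ?thesis using t e by (intro exI[of _ t]) (auto simp: f_def)
qed

lemma logitBR_sg: "lam > 0 \<Longrightarrow> logitBR u lam z = (\<chi> i. sg (Dv u i z / lam))"
  by (simp add: vec_eq_iff logitBR_nth)

lemma continuous_on_sg[continuous_intros]: "continuous_on S f \<Longrightarrow> continuous_on S (\<lambda>x. sg (f x))"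
  unfolding sg_def by (intro continuous_intros) (auto, metis onep less_irrefl)

lemma cont_BR_lam: "continuous_on {0<..} (\<lambda>lam. (\<chi> i. sg (Dv u i z / lam)) :: real^'n::finite)"
  by (intro continuous_on_vec_lambda continuous_intros) auto



lemma exp_neg_le: fixes t :: real shows "t > 0 \<Longrightarrow> exp (- t) \<le> 1 / t"
proof -
  assume t: "t > 0"
  have "t \<le> exp t" using exp_ge_add_one_self[of t] by linarith
  then have "1 / exp t \<le> 1 / t" using t by (intro divide_left_mono) auto
  then show ?thesis by (simp add: exp_minus inverse_eq_divide)
qed

lemma exp_neg_le2: fixes t :: real shows "t > 0 \<Longrightarrow> exp (- t) \<le> 4 / t^2"
proof -
  assume t: "t > 0"
  have "t^2 / 4 \<le> exp t" using exp_ge_sq4[of t] t by simp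
  then have "1 / exp t \<le> 1 / (t^2 / 4)" using t by (intro divide_left_mono) auto
  then show ?thesis by (simp add: exp_minus inverse_eq_divide)
qed

lemma neg_div: fixes a d m :: real shows "a \<le> - d \<Longrightarrow> 0 < m \<Longrightarrow> a / m \<le> - (d / m)"
  using divide_right_mono[of a "-d" m] by simp

lemma pos_div: fixes a d m :: real shows "d \<le> a \<Longrightarrow> 0 < m \<Longrightarrow> d / m \<le> a / m"
  using divide_right_mono[of d a m] by simp

lemma sum_abs_le_norm: "(\<Sum>j\<in>UNIV. \<bar>d$j\<bar>) \<le> real CARD('n) * norm (d :: real^'n::finite)"
proof -
  have "(\<Sum>j\<in>UNIV. \<bar>d$j\<bar>) \<le> (\<Sum>j\<in>(UNIV::'n set). norm d)" by (intro sum_mono component_le_norm_cart)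
  then show ?thesis by simp
qed

lemma branch:
  fixes xs :: "real^'n::finite"
  assumes xsNE: "xs \<in> NE u" and pure: "pure_profile xs" and qs: "quasi_strict u xs"
  shows "\<exists>r>0. \<exists>l>0. \<forall>lam x. 0 < lam \<longrightarrow> lam < l \<longrightarrow> x \<in> ND u lam \<longrightarrow> dist x xs < r \<longrightarrow> pure_ND u lam x"
proof -
  have xs01: "xs$i = 0 \<or> xs$i = 1" for i using pure by (simp add: pure_profile_def)
  have Dpos: "Dv u i xs > 0" if "xs$i = 1" for i using qs that unfolding quasi_strict_def Upure_diff[symmetric] by auto
  have Dneg: "Dv u i xs < 0" if "xs$i = 0" for i using qs that unfolding quasi_strict_def Upure_diff[symmetric] by auto
  have Dnz: "Dv u i xs \<noteq> 0" for i using xs01[of i] Dpos Dneg by force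
  define \<delta> where "\<delta> = Min (range (\<lambda>i. \<bar>Dv u i xs\<bar>)) / 2"
  have \<delta>pos: "\<delta> > 0" unfolding \<delta>_def using Dnz by (simp add: Min_gr_iff)
  have \<delta>le: "2 * \<delta> \<le> \<bar>Dv u i xs\<bar>" for i unfolding \<delta>_def by (simp add: Min_le)
  define K where "K = (\<Sum>i\<in>UNIV. \<Sum>j\<in>UNIV. \<bar>Wm u i j xs\<bar>) + 1"
  have K1: "K \<ge> 1" unfolding K_def by (simp add: sum_nonneg)
  define N where "N = real CARD('n)"
  have N1: "N \<ge> 1" unfolding N_def by simp
  have "eventually (\<lambda>x. (\<forall>i. \<bar>Dv u i x - Dv u i xs\<bar> < \<delta>) \<and> (\<forall>i j. \<bar>Wm u i j x - Wm u i j xs\<bar> < 1)) (nhds xs)"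
    by (intro eventually_conj ev_Dv ev_Wm \<delta>pos) simp
  then obtain \<rho>0 where \<rho>0: "\<rho>0 > 0" and rP: "\<And>x. dist x xs < \<rho>0 \<Longrightarrow>
      (\<forall>i. \<bar>Dv u i x - Dv u i xs\<bar> < \<delta>) \<and> (\<forall>i j. \<bar>Wm u i j x - Wm u i j xs\<bar> < 1)"
    unfolding eventually_nhds_metric by blast
  define \<rho> where "\<rho> = \<rho>0 / 2"
  have \<rho>pos: "\<rho> > 0" and \<rho>lt: "\<rho> < \<rho>0" using \<rho>0 by (auto simp: \<rho>_def)
  define C where "C = cball xs \<rho> \<inter> simplex_prod"
  have xsC: "xs \<in> C" using xsNE \<rho>pos by (auto simp: C_def NE_def)
  have Wb: "\<bar>Wm u i j y\<bar> \<le> K" if "dist y xs \<le> \<rho>" for i j y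
  proof -
    have "\<bar>Wm u i j y - Wm u i j xs\<bar> < 1" using rP[of y] that \<rho>lt by auto
    then show ?thesis using W_le_K[of u i j xs] unfolding K_def by arith
  qed
  have side: "(xs$i = 1 \<and> Dv u i z \<ge> \<delta>) \<or> (xs$i = 0 \<and> Dv u i z \<le> - \<delta>)" if "dist z xs \<le> \<rho>" for i z
  proof -
    have "\<bar>Dv u i z - Dv u i xs\<bar> < \<delta>" using rP[of z] that \<rho>lt by auto
    then show ?thesis using xs01[of i] Dpos[of i] Dneg[of i] \<delta>le[of i] by auto
  qed
  have lip: "\<bar>Dv u i z - Dv u i z'\<bar> \<le> K * N * dist z z'" if "z \<in> C" "z' \<in> C" for i z z'
  proof -
    obtain t where t: "0 \<le> t" "t \<le> 1"
      and e: "Dv u i z - Dv u i z' = (\<Sum>j\<in>UNIV. Wm u i j (z' + t *\<^sub>R (z - z')) * (z - z')$j)"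
      using Dv_mvt by blast
    have "dist (z' + t *\<^sub>R (z - z')) xs \<le> \<rho>"
    proof -
      have "z' + t *\<^sub>R (z - z') - xs = (1 - t) *\<^sub>R (z' - xs) + t *\<^sub>R (z - xs)" by (simp add: algebra_simps)
      then have "norm (z' + t *\<^sub>R (z - z') - xs) \<le> (1 - t) * norm (z' - xs) + t * norm (z - xs)"
        using t by (metis abs_of_nonneg diff_ge_0_iff_ge norm_scaleR norm_triangle_ineq)
      also have "\<dots> \<le> (1 - t) * \<rho> + t * \<rho>"
        using that t by (intro add_mono mult_left_mono) (auto simp: C_def dist_norm norm_minus_commute)
      finally show ?thesis by (simp add: dist_norm algebra_simps)
    qed
    then have "\<bar>Dv u i z - Dv u i z'\<bar> \<le> K * (\<Sum>j\<in>UNIV. \<bar>(z - z')$j\<bar>)"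
      unfolding e by (intro abs_sum_le_K Wb)
    also have "\<dots> \<le> K * (N * dist z z')"
      using K1 sum_abs_le_norm[of "z - z'"] by (intro mult_left_mono) (auto simp: N_def dist_norm)
    finally show ?thesis by simp
  qed
  define G where "G mu z = (\<chi> i. sg (Dv u i z / mu))" for mu z
  define l where "l = min (\<rho> * \<delta> / N) (\<delta>^2 / (8 * K * N^2))"
  have lpos: "l > 0" using \<rho>pos \<delta>pos K1 N1 by (simp add: l_def)
  have comp: "\<bar>G mu z $ i - xs$i\<bar> \<le> mu / \<delta>" if "z \<in> C" "mu > 0" for mu z i
  proof -
    have ed: "exp (- (\<delta> / mu)) \<le> mu / \<delta>" using exp_neg_le[of "\<delta> / mu"] \<delta>pos that(2) by simp
    from side[of z i] that(1) have "(xs$i = 1 \<and> Dv u i z \<ge> \<delta>) \<or> (xs$i = 0 \<and> Dv u i z \<le> - \<delta>)"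
      by (auto simp: C_def dist_commute)
    then show ?thesis
    proof
      assume a: "xs$i = 1 \<and> Dv u i z \<ge> \<delta>"
      then have s: "Dv u i z / mu \<ge> \<delta> / mu" using that(2) by (simp add: divide_right_mono)
      have "1 - sg (Dv u i z / mu) \<le> exp (- (Dv u i z / mu))"
        using s \<delta>pos that(2) by (intro sg_close1) (meson divide_pos_pos less_le_trans less_imp_le)
      also have "\<dots> \<le> exp (- (\<delta> / mu))" using s by simp
      finally show ?thesis using a ed sg_lt1[of "Dv u i z / mu"] by (simp add: G_def)
    next
      assume a: "xs$i = 0 \<and> Dv u i z \<le> - \<delta>"
      then have "Dv u i z / mu \<le> (- \<delta>) / mu" using that(2) by (intro divide_right_mono) auto
      then have s: "Dv u i z / mu \<le> - (\<delta> / mu)" by simp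
      have "sg (Dv u i z / mu) \<le> exp (Dv u i z / mu)"
        using s \<delta>pos that(2) by (intro sg_close0) (smt (verit) divide_pos_pos)
      also have "\<dots> \<le> exp (- (\<delta> / mu))" using s by simp
      finally show ?thesis using a ed sg_pos[of "Dv u i z / mu"] by (simp add: G_def)
    qed
  qed
  have distG: "dist (G mu z) xs \<le> N * (mu / \<delta>)" if "z \<in> C" "mu > 0" for mu z
  proof -
    have "dist (G mu z) xs \<le> (\<Sum>i\<in>UNIV. \<bar>(G mu z - xs)$i\<bar>)" unfolding dist_norm by (rule norm_le_l1_cart)
    also have "\<dots> \<le> (\<Sum>i\<in>(UNIV::'n set). mu / \<delta>)" using comp[OF that] by (intro sum_mono) simp
    finally show ?thesis by (simp add: N_def)
  qed
  have GC: "G mu z \<in> C" if "z \<in> C" "0 < mu" "mu < l" for mu z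
  proof -
    have "N * (mu / \<delta>) \<le> \<rho>" using that(3) N1 \<delta>pos unfolding l_def by (simp add: field_simps)
    then have "dist xs (G mu z) \<le> \<rho>" using distG[OF that(1,2)] by (simp add: dist_commute)
    moreover have "G mu z \<in> simplex_prod"
      by (simp add: G_def simplex_prod_def less_imp_le[OF sg_pos] less_imp_le[OF sg_lt1])
    ultimately show ?thesis by (simp add: C_def)
  qed
  have Gcontr: "dist (G mu z) (G mu z') \<le> (1/2) * dist z z'" if "z \<in> C" "z' \<in> C" "0 < mu" "mu < l" for mu z z'
  proof -
    have c: "\<bar>G mu z $ i - G mu z' $ i\<bar> \<le> (4 * mu / \<delta>^2) * (K * N * dist z z')" for i
    proof -
      have sd: "(Dv u i z / mu \<ge> \<delta> / mu \<and> Dv u i z' / mu \<ge> \<delta> / mu) \<or>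
                (Dv u i z / mu \<le> - (\<delta> / mu) \<and> Dv u i z' / mu \<le> - (\<delta> / mu))"
      proof -
        have "(Dv u i z \<ge> \<delta> \<and> Dv u i z' \<ge> \<delta>) \<or> (Dv u i z \<le> - \<delta> \<and> Dv u i z' \<le> - \<delta>)"
          using side[of z i] side[of z' i] that(1,2) by (auto simp: C_def dist_commute)
        then show ?thesis using that(3) by (auto intro: neg_div pos_div)
      qed
      have "\<bar>G mu z $ i - G mu z' $ i\<bar> \<le> exp (- (\<delta> / mu)) * \<bar>Dv u i z / mu - Dv u i z' / mu\<bar>"
        unfolding G_def using \<delta>pos that(3) by (simp add: sg_lip[OF _ sd])
      also have "\<dots> = exp (- (\<delta> / mu)) / mu * \<bar>Dv u i z - Dv u i z'\<bar>"
        using that(3) by (simp add: diff_divide_distrib[symmetric] abs_divide)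
      also have "\<dots> \<le> (4 * mu / \<delta>^2) * (K * N * dist z z')"
      proof (rule mult_mono)
        have "exp (- (\<delta> / mu)) \<le> 4 / (\<delta> / mu)^2" using exp_neg_le2[of "\<delta>/mu"] \<delta>pos that(3) by simp
        then show "exp (- (\<delta> / mu)) / mu \<le> 4 * mu / \<delta>^2"
          using that(3) \<delta>pos by (simp add: field_simps power2_eq_square)
      qed (use lip[OF that(1,2)] \<delta>pos that(3) in auto)
      finally show ?thesis .
    qed
    have "dist (G mu z) (G mu z') \<le> (\<Sum>i\<in>UNIV. \<bar>(G mu z - G mu z')$i\<bar>)" unfolding dist_norm by (rule norm_le_l1_cart)
    also have "\<dots> \<le> (\<Sum>i\<in>(UNIV::'n set). (4 * mu / \<delta>^2) * (K * N * dist z z'))" using c by (intro sum_mono) simp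
    also have "\<dots> = (4 * mu * K * N^2 / \<delta>^2) * dist z z'" by (simp add: N_def power2_eq_square)
    also have "\<dots> \<le> (1/2) * dist z z'"
    proof (rule mult_right_mono)
      have "mu \<le> \<delta>^2 / (8 * K * N^2)" using that(4) unfolding l_def by simp
      then show "4 * mu * K * N^2 / \<delta>^2 \<le> 1/2" using \<delta>pos K1 N1 by (simp add: field_simps)
    qed simp
    finally show ?thesis .
  qed
  have complC: "complete C" unfolding C_def complete_eq_closed by (intro closed_Int closed_cball closed_simplex)
  have fix1: "\<exists>!z. z \<in> C \<and> G mu z = z" if "0 < mu" "mu < l" for mu
  proof -
    have "\<exists>!z\<in>C. G mu z = z"
    proof (rule Banach_fix[OF complC])
      show "C \<noteq> {}" using xsC by blast
      show "G mu ` C \<subseteq> C" using GC[OF _ that] by blast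
      show "dist (G mu x) (G mu y) \<le> (1/2) * dist x y" if "x \<in> C" "y \<in> C" for x y
        using Gcontr[OF that \<open>0 < mu\<close> \<open>mu < l\<close>] .
    qed auto
    then show ?thesis by auto
  qed
  define y where "y mu = (THE z. z \<in> C \<and> G mu z = z)" for mu
  have yP: "y mu \<in> C \<and> G mu (y mu) = y mu" if "0 < mu" "mu < l" for mu
    unfolding y_def using theI'[OF fix1[OF that]] .
  have yU: "z = y mu" if "0 < mu" "mu < l" "z \<in> C" "G mu z = z" for mu z
    using fix1[OF that(1,2)] yP[OF that(1,2)] that(3,4) by blast
  have ND_iff: "z \<in> ND u mu \<longleftrightarrow> z \<in> simplex_prod \<and> G mu z = z" if "mu > 0" for z mu
    using that by (auto simp: ND_def logitBR_sg G_def)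
  have main: "\<forall>lam x. 0 < lam \<longrightarrow> lam < l \<longrightarrow> x \<in> ND u lam \<longrightarrow> dist x xs < \<rho> \<longrightarrow> pure_ND u lam x"
  proof (intro allI impI)
    fix lam x assume lam: "0 < lam" "lam < l" and xND: "x \<in> ND u lam" and dx: "dist x xs < \<rho>"
    have xC: "x \<in> C" using xND dx ND_iff[OF lam(1)] by (auto simp: C_def dist_commute)
    have xy: "y lam = x" using yU[OF lam xC] ND_iff[OF lam(1)] xND by auto
    have yin: "y mu \<in> ND u mu" if "mu \<in> {0<..lam}" for mu
      using yP[of mu] that lam ND_iff[of mu "y mu"] by (auto simp: C_def)
    have cont: "continuous_on {0<..lam} y"
      unfolding continuous_on_iff
    proof (intro ballI allI impI)
      fix mu0 e :: real assume mu0: "mu0 \<in> {0<..lam}" and e: "e > 0"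
      have m0: "0 < mu0" "mu0 < l" using mu0 lam by auto
      define z0 where "z0 = y mu0"
      have z0C: "z0 \<in> C" using yP[OF m0] by (simp add: z0_def)
      obtain d where d: "d > 0" and dP: "\<And>mu. mu \<in> {0<..} \<Longrightarrow> dist mu mu0 < d \<Longrightarrow> dist (G mu z0) (G mu0 z0) < e / 2"
        using cont_BR_lam[of u z0, unfolded continuous_on_iff] m0(1) e unfolding G_def
        by (metis greaterThan_iff half_gt_zero)
      show "\<exists>d>0. \<forall>mu\<in>{0<..lam}. dist mu mu0 < d \<longrightarrow> dist (y mu) (y mu0) < e"
      proof (intro exI[of _ d] conjI d ballI impI)
        fix mu assume mu: "mu \<in> {0<..lam}" and dm: "dist mu mu0 < d"
        have m: "0 < mu" "mu < l" using mu lam by auto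
        have ymu: "y mu \<in> C" "G mu (y mu) = y mu" using yP[OF m] by auto
        have "dist (y mu) z0 = dist (G mu (y mu)) (G mu0 z0)" using ymu yP[OF m0] by (simp add: z0_def)
        also have "\<dots> \<le> dist (G mu (y mu)) (G mu z0) + dist (G mu z0) (G mu0 z0)" by (rule dist_triangle)
        also have "\<dots> \<le> (1/2) * dist (y mu) z0 + dist (G mu z0) (G mu0 z0)"
          using Gcontr[OF ymu(1) z0C m] by simp
        finally have "dist (y mu) z0 \<le> 2 * dist (G mu z0) (G mu0 z0)" by simp
        also have "\<dots> < e" using dP[of mu] dm m by simp
        finally show "dist (y mu) (y mu0) < e" by (simp add: z0_def)
      qed
    qed
    have lim: "(y \<longlongrightarrow> xs) (at_right 0)"
      unfolding tendsto_iff
    proof (intro allI impI)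
      fix e :: real assume e: "e > 0"
      define b where "b = min l (e * \<delta> / N)"
      have b: "b > 0" using lpos e \<delta>pos N1 by (simp add: b_def)
      show "eventually (\<lambda>mu. dist (y mu) xs < e) (at_right 0)"
        unfolding eventually_at_right_field
      proof (intro exI[of _ b] conjI b allI impI)
        fix mu :: real assume m: "0 < mu" "mu < b"
        then have m': "0 < mu" "mu < l" by (auto simp: b_def)
        have "dist (y mu) xs = dist (G mu (y mu)) xs" using yP[OF m'] by simp
        also have "\<dots> \<le> N * (mu / \<delta>)" using distG yP[OF m'] m' by blast
        also have "\<dots> < e"
        proof -
          have "mu < e * \<delta> / N" using m by (simp add: b_def)
          then show ?thesis using N1 \<delta>pos by (simp add: field_simps)
        qed
        finally show "dist (y mu) xs < e" .
      qed
    qed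
    show "pure_ND u lam x" unfolding pure_ND_def
      using cont yin xy xsNE pure lim by blast
  qed
  then show ?thesis using \<rho>pos lpos by blast
qed



definition gv :: "(('n::finite \<Rightarrow> bool) \<Rightarrow> real) \<Rightarrow> real^'n \<Rightarrow> real" where
  "gv u x = (\<Sum>i\<in>UNIV. max (Dv u i x) 0 * (1 - x$i) + max (- Dv u i x) 0 * x$i)"

lemma gv_cont: "continuous_on S (gv u)"
  unfolding gv_def by (intro continuous_intros continuous_on_Dv continuous_on_id)

lemma gv_term_nonneg: "x \<in> simplex_prod \<Longrightarrow> 0 \<le> max (Dv u i x) 0 * (1 - x$i) + max (- Dv u i x) 0 * x$i"
  by (auto simp: simplex_prod_def intro!: add_nonneg_nonneg mult_nonneg_nonneg)

lemma gv_nonneg: "x \<in> simplex_prod \<Longrightarrow> 0 \<le> gv u x"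
  unfolding gv_def by (intro sum_nonneg gv_term_nonneg)

lemma gv0_NE:
  assumes xS: "x \<in> simplex_prod" and g0: "gv u x = 0"
  shows "x \<in> NE u"
proof -
  have term0: "max (Dv u i x) 0 * (1 - x$i) + max (- Dv u i x) 0 * x$i = 0" for i
    using g0 gv_term_nonneg[OF xS] unfolding gv_def by (subst (asm) sum_nonneg_eq_0_iff) auto
  have "mlext u (upd x i t) \<le> mlext u x" if t: "t \<in> {0..1}" for i t
  proof -
    define D where "D = Dv u i x"
    have e1: "mlext u (upd x i t) = mlext u (upd x i 0) + t * D"
      unfolding mlext_affine[of u x i t] D_def Dv_def by (simp add: algebra_simps)
    have e2: "mlext u x = mlext u (upd x i 0) + x$i * D"
      using mlext_affine'[of u x i] unfolding D_def Dv_def by (simp add: algebra_simps)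
    have xi: "0 \<le> x$i" "x$i \<le> 1" using xS by (auto simp: simplex_prod_def)
    have "t * D \<le> x$i * D"
    proof (cases "D > 0")
      case True
      then have "D * (1 - x$i) = 0" using term0[of i] xi by (simp add: D_def max_def)
      then have "x$i = 1" using True by simp
      then show ?thesis using t True by (simp add: mult_right_mono)
    next
      case False
      show ?thesis
      proof (cases "D < 0")
        case True
        then have "(- D) * x$i = 0" using term0[of i] xi by (simp add: D_def max_def)
        then have "x$i = 0" using True by simp
        then show ?thesis using t True by (simp add: mult_nonneg_nonpos)
      next
        case False
        then have "D = 0" using \<open>\<not> D > 0\<close> by simp
        then show ?thesis by simp
      qed
    qed
    then show ?thesis unfolding e1 e2 by simp
  qed
  then show ?thesis using xS by (simp add: NE_def)
qed

lemma gv_ND: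
  fixes x :: "real^'n::finite"
  assumes xND: "x \<in> ND u lam" and lam: "lam > 0"
  shows "gv u x \<le> real CARD('n) * lam"
proof -
  have "max (Dv u i x) 0 * (1 - x$i) + max (- Dv u i x) 0 * x$i \<le> lam" for i :: 'n
  proof (cases "Dv u i x \<ge> 0")
    case True
    then show ?thesis using sg_tail_le[OF True lam] ND_nth[OF xND lam, of i] by (simp add: mult.commute)
  next
    case False
    then have F: "Dv u i x \<le> 0" by simp
    then show ?thesis using sg_tail_le'[OF F lam] ND_nth[OF xND lam, of i] by (simp add: mult.commute)
  qed
  then have "gv u x \<le> (\<Sum>i\<in>(UNIV::'n set). lam)" unfolding gv_def by (intro sum_mono) auto
  then show ?thesis by simp
qed

lemma compact_simplex: "compact (simplex_prod :: (real^'n::finite) set)"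
proof -
  have "bounded (simplex_prod :: (real^'n) set)"
    unfolding bounded_iff
  proof (intro exI ballI)
    fix x :: "real^'n" assume "x \<in> simplex_prod"
    then have "(\<Sum>i\<in>UNIV. \<bar>x$i\<bar>) \<le> (\<Sum>i\<in>(UNIV::'n set). 1)" by (intro sum_mono) (auto simp: simplex_prod_def)
    then show "norm x \<le> real CARD('n)" using norm_le_l1_cart[of x] by simp
  qed
  then show ?thesis using closed_simplex by (simp add: compact_eq_bounded_closed)
qed

lemma closed_NE: "closed (NE u :: (real^'n::finite) set)"
proof -
  have e: "NE u = simplex_prod \<inter> (\<Inter>i. \<Inter>t\<in>{0..1}. {x::real^'n. mlext u (upd x i t) \<le> mlext u x})"
    by (auto simp: NE_def)
  have "closed {x::real^'n. mlext u (upd x i t) \<le> mlext u x}" for i t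
    by (intro closed_Collect_le continuous_on_mlext_comp continuous_on_upd continuous_on_id continuous_on_mlext)
  then show ?thesis unfolding e by (intro closed_Int closed_simplex closed_INT) auto
qed

lemma compact_NE: "compact (NE u :: (real^'n::finite) set)"
proof -
  have "NE u = simplex_prod \<inter> NE u" by (auto simp: NE_def)
  then show ?thesis using compact_Int_closed[OF compact_simplex closed_NE] by metis
qed

lemma ND_near_NE:
  fixes u :: "('n::finite \<Rightarrow> bool) \<Rightarrow> real"
  assumes \<rho>: "\<rho> > 0"
  shows "\<exists>l>0. \<forall>lam x. 0 < lam \<longrightarrow> lam < l \<longrightarrow> x \<in> ND u lam \<longrightarrow> (\<exists>z\<in>NE u. dist x z < \<rho>)"
proof -
  define U where "U = (\<Union>z\<in>NE u. ball z \<rho>)"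
  define Kc where "Kc = simplex_prod - U"
  have NDS: "x \<in> simplex_prod" if "x \<in> ND u lam" for x lam using that by (simp add: ND_def)
  have Kc_compact: "compact Kc" unfolding Kc_def U_def
    by (intro compact_diff compact_simplex open_UN ballI open_ball)
  show ?thesis
  proof (cases "Kc = {}")
    case True
    show ?thesis
    proof (intro exI[of _ 1] conjI allI impI)
      fix lam x assume "x \<in> ND u lam"
      then have "x \<in> U" using True NDS unfolding Kc_def by blast
      then show "\<exists>z\<in>NE u. dist x z < \<rho>" unfolding U_def by (auto simp: dist_commute)
    qed simp
  next
    case False
    obtain k where kK: "k \<in> Kc" and kmin: "\<And>y. y \<in> Kc \<Longrightarrow> gv u k \<le> gv u y"
      using continuous_attains_inf[OF Kc_compact False gv_cont] by blast
    have kS: "k \<in> simplex_prod" using kK by (simp add: Kc_def)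
    have mpos: "gv u k > 0"
    proof (rule ccontr)
      assume "\<not> gv u k > 0"
      then have "gv u k = 0" using gv_nonneg[OF kS, of u] by simp
      then have "k \<in> NE u" by (rule gv0_NE[OF kS])
      then have "k \<in> U" using \<rho> unfolding U_def by force
      then show False using kK by (simp add: Kc_def)
    qed
    define l where "l = gv u k / real CARD('n)"
    have lpos: "l > 0" using mpos by (simp add: l_def)
    have "\<forall>lam x. 0 < lam \<longrightarrow> lam < l \<longrightarrow> x \<in> ND u lam \<longrightarrow> (\<exists>z\<in>NE u. dist x z < \<rho>)"
    proof (intro allI impI)
      fix lam x assume lam: "0 < lam" "lam < l" and xND: "x \<in> ND u lam"
      have "gv u x \<le> real CARD('n) * lam" by (rule gv_ND[OF xND lam(1)])
      also have "\<dots> < gv u k" using lam(2) unfolding l_def by (simp add: field_simps)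
      finally have "x \<notin> Kc" using kmin by force
      then have "x \<in> U" using NDS[OF xND] by (simp add: Kc_def)
      then show "\<exists>z\<in>NE u. dist x z < \<rho>" unfolding U_def by (auto simp: dist_commute)
    qed
    then show ?thesis using lpos by blast
  qed
qed



lemma local_data:
  fixes z :: "real^'n::finite"
  assumes reg: "regular_NE u z"
  shows "\<exists>p. fst p > 0 \<and> snd p > 0 \<and> (\<forall>lam x. 0 < lam \<longrightarrow> lam < snd p \<longrightarrow> x \<in> ND u lam \<longrightarrow> dist x z < fst p \<longrightarrow>
     hyperbolic_pt (sbr_field u lam) x \<and> (linearly_stable (sbr_field u lam) x \<longleftrightarrow> pure_profile z) \<and>
     (pure_profile z \<longrightarrow> pure_ND u lam x))"
proof -
  obtain r1 l1 where r1: "r1 > 0" and l1: "l1 > 0" and P1: "\<forall>lam x. 0 < lam \<longrightarrow> lam < l1 \<longrightarrow> x \<in> ND u lam \<longrightarrow> dist x z < r1 \<longrightarrow>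
     hyperbolic_pt (sbr_field u lam) x \<and> (linearly_stable (sbr_field u lam) x \<longleftrightarrow> pure_profile z)"
    using local_analysis[OF reg] by blast
  obtain r2 l2 where r2: "r2 > 0" and l2: "l2 > 0" and P2: "\<forall>lam x. 0 < lam \<longrightarrow> lam < l2 \<longrightarrow> x \<in> ND u lam \<longrightarrow> dist x z < r2 \<longrightarrow>
     (pure_profile z \<longrightarrow> pure_ND u lam x)"
  proof (cases "pure_profile z")
    case True
    have "z \<in> NE u" "quasi_strict u z" using reg by (auto simp: regular_NE_def)
    from branch[OF this(1) True this(2)] obtain r l where "r > 0" "l > 0"
      "\<forall>lam x. 0 < lam \<longrightarrow> lam < l \<longrightarrow> x \<in> ND u lam \<longrightarrow> dist x z < r \<longrightarrow> pure_ND u lam x" by blast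
    then show ?thesis using that by blast
  next
    case False
    then show ?thesis using that[of 1 1] by simp
  qed
  show ?thesis
    by (rule exI[of _ "(min r1 r2, min l1 l2)"]) (use r1 r2 l1 l2 P1 P2 in auto)
qed

theorem proposition1:
  fixes util :: "'n::finite \<Rightarrow> ('n \<Rightarrow> bool) \<Rightarrow> real"
    and u :: "('n \<Rightarrow> bool) \<Rightarrow> real"
  assumes "potential_game util u"
    and "regular_game u"
  shows "\<exists>lam0>0. \<forall>lam. 0 < lam \<and> lam < lam0 \<longrightarrow>
           (\<forall>x\<in>ND u lam. hyperbolic_pt (sbr_field u lam) x \<and>
              (linearly_stable (sbr_field u lam) x \<longleftrightarrow> pure_ND u lam x))"
proof -
  have reg: "\<And>z. z \<in> NE u \<Longrightarrow> regular_NE u z" using assms(2) by (simp add: regular_game_def)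
  define Pd where "Pd z p \<longleftrightarrow> fst p > 0 \<and> snd p > 0 \<and> (\<forall>lam x. 0 < lam \<longrightarrow> lam < snd p \<longrightarrow> x \<in> ND u lam \<longrightarrow> dist x z < fst p \<longrightarrow>
     hyperbolic_pt (sbr_field u lam) x \<and> (linearly_stable (sbr_field u lam) x \<longleftrightarrow> pure_profile z) \<and>
     (pure_profile z \<longrightarrow> pure_ND u lam x))" for z :: "real^'n" and p :: "real \<times> real"
  have "\<forall>z\<in>NE u. \<exists>p. Pd z p" unfolding Pd_def using local_data[OF reg] by blast
  then obtain f where f: "\<And>z. z \<in> NE u \<Longrightarrow> Pd z (f z)" by (metis bchoice)
  define R where "R z = fst (f z)" for z
  define L where "L z = snd (f z)" for z
  have Rpos: "R z > 0" and Lpos: "L z > 0" if "z \<in> NE u" for z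
    using f[OF that] by (auto simp: Pd_def R_def L_def)
  have LP: "\<And>lam x. 0 < lam \<Longrightarrow> lam < L z \<Longrightarrow> x \<in> ND u lam \<Longrightarrow> dist x z < R z \<Longrightarrow>
     hyperbolic_pt (sbr_field u lam) x \<and> (linearly_stable (sbr_field u lam) x \<longleftrightarrow> pure_profile z) \<and>
     (pure_profile z \<longrightarrow> pure_ND u lam x)" if "z \<in> NE u" for z
    using f[OF that] unfolding Pd_def R_def L_def by blast
  have "NE u \<subseteq> (\<Union>c\<in>NE u. ball c (R c / 2))" using Rpos by force
  from compactE_image[OF compact_NE _ this] obtain C' where C'sub: "C' \<subseteq> NE u" and C'fin: "finite C'"
    and C'cov: "NE u \<subseteq> (\<Union>c\<in>C'. ball c (R c / 2))" by blast
  define \<rho> where "\<rho> = Min (insert 1 ((\<lambda>c. R c / 2) ` C'))"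
  have \<rho>pos: "\<rho> > 0" unfolding \<rho>_def using C'fin C'sub Rpos by (auto simp: Min_gr_iff)
  have \<rho>le: "\<rho> \<le> R c / 2" if "c \<in> C'" for c unfolding \<rho>_def by (rule Min_le) (use C'fin that in auto)
  define lA where "lA = Min (insert 1 (L ` C'))"
  have lApos: "lA > 0" unfolding lA_def using C'fin C'sub Lpos by (auto simp: Min_gr_iff)
  have lAle: "lA \<le> L c" if "c \<in> C'" for c unfolding lA_def using C'fin that by (auto intro: Min_le)
  obtain l2 where l2: "l2 > 0" and l2P: "\<forall>lam x. 0 < lam \<longrightarrow> lam < l2 \<longrightarrow> x \<in> ND u lam \<longrightarrow> (\<exists>z\<in>NE u. dist x z < \<rho>)"
    using ND_near_NE[OF \<rho>pos, of u] by blast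
  define lam0 where "lam0 = min lA l2"
  have lam0pos: "lam0 > 0" using lApos l2 by (simp add: lam0_def)
  have cover: "\<exists>c\<in>C'. dist x c < R c \<and> lam < L c" if h: "0 < lam" "lam < lam0" "x \<in> ND u lam" for lam x
  proof -
    have "\<exists>z\<in>NE u. dist x z < \<rho>" using l2P h by (auto simp: lam0_def)
    then obtain z where z: "z \<in> NE u" "dist x z < \<rho>" by blast
    then obtain c where c: "c \<in> C'" "z \<in> ball c (R c / 2)" using C'cov by blast
    have "dist x c \<le> dist x z + dist z c" by (rule dist_triangle)
    also have "\<dots> < R c" using z(2) c \<rho>le[OF c(1)] by (simp add: dist_commute)
    finally have "dist x c < R c" .
    moreover have "lam < L c" using h(2) lAle[OF c(1)] by (simp add: lam0_def)
    ultimately show ?thesis using c(1) by blast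
  qed
  have status: "hyperbolic_pt (sbr_field u lam) x \<and> (linearly_stable (sbr_field u lam) x \<longleftrightarrow> pure_profile c) \<and>
     (pure_profile c \<longrightarrow> pure_ND u lam x)"
    if "0 < lam" "c \<in> C'" "dist x c < R c" "lam < L c" "x \<in> ND u lam" for lam x c
    using LP[OF _ that(1,4,5,3)] C'sub that(2) by blast
  have main: "hyperbolic_pt (sbr_field u lam) x \<and> (linearly_stable (sbr_field u lam) x \<longleftrightarrow> pure_ND u lam x)"
    if lam: "0 < lam" "lam < lam0" and xND: "x \<in> ND u lam" for lam x
  proof -
    obtain c where c: "c \<in> C'" "dist x c < R c" "lam < L c" using cover[OF lam xND] by blast
    note st = status[OF lam(1) c xND]
    have "pure_ND u lam x \<Longrightarrow> linearly_stable (sbr_field u lam) x"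
    proof -
      assume "pure_ND u lam x"
      then obtain y xs where cont: "continuous_on {0<..lam} y" and yin: "\<forall>mu\<in>{0<..lam}. y mu \<in> ND u mu"
        and ylam: "y lam = x" and xsNE: "xs \<in> NE u" and xsp: "pure_profile xs" and lim: "(y \<longlongrightarrow> xs) (at_right 0)"
        unfolding pure_ND_def by blast
      define A where "A = (\<Union>c\<in>{c\<in>C'. pure_profile c}. ball c (R c))"
      define B where "B = (\<Union>c\<in>{c\<in>C'. \<not> pure_profile c}. ball c (R c))"
      define I where "I = y ` {0<..lam}"
      have conn: "connected I" unfolding I_def by (rule connected_continuous_image[OF cont connected_Ioc])
      have oA: "open A" and oB: "open B" unfolding A_def B_def by auto
      have sub: "I \<subseteq> A \<union> B"
      proof
        fix w assume "w \<in> I"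
        then obtain mu where mu: "mu \<in> {0<..lam}" "w = y mu" unfolding I_def by blast
        have "0 < mu" "mu < lam0" using mu lam by auto
        from cover[OF this yin[rule_format, OF mu(1)]] obtain c where "c \<in> C'" "dist (y mu) c < R c" by blast
        then show "w \<in> A \<union> B" unfolding A_def B_def using mu(2) by (cases "pure_profile c") (auto simp: dist_commute)
      qed
      have disj: "A \<inter> B \<inter> I = {}"
      proof (rule ccontr)
        assume "A \<inter> B \<inter> I \<noteq> {}"
        then obtain w where w: "w \<in> A" "w \<in> B" "w \<in> I" by blast
        then obtain mu where mu: "mu \<in> {0<..lam}" "w = y mu" unfolding I_def by blast
        have m: "0 < mu" "mu < lam0" using mu lam by auto
        have wND: "w \<in> ND u mu" using yin mu by auto
        obtain c1 where c1: "c1 \<in> C'" "pure_profile c1" "dist w c1 < R c1" using w(1) unfolding A_def by (auto simp: dist_commute)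
        obtain c2 where c2: "c2 \<in> C'" "\<not> pure_profile c2" "dist w c2 < R c2" using w(2) unfolding B_def by (auto simp: dist_commute)
        have "mu < L c1" "mu < L c2" using m lAle[OF c1(1)] lAle[OF c2(1)] by (auto simp: lam0_def)
        then show False using status[OF m(1) c1(1) c1(3) _ wND] status[OF m(1) c2(1) c2(3) _ wND] c1(2) c2(2) by blast
      qed
      have AI: "A \<inter> I \<noteq> {}"
      proof -
        have "eventually (\<lambda>mu. dist (y mu) xs < R xs) (at_right 0)"
          using lim Rpos[OF xsNE] unfolding tendsto_iff by blast
        then obtain b where b: "b > 0" and bP: "\<And>mu. 0 < mu \<Longrightarrow> mu < b \<Longrightarrow> dist (y mu) xs < R xs"
          unfolding eventually_at_right_field by auto
        define mu where "mu = min b (min lam (L xs)) / 2"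
        have m: "0 < mu" "mu < b" "mu \<le> lam" "mu < L xs" "mu < lam0"
          using b lam Lpos[OF xsNE] by (auto simp: mu_def)
        have muI: "mu \<in> {0<..lam}" using m by auto
        have yND: "y mu \<in> ND u mu" using yin muI by blast
        have stab: "linearly_stable (sbr_field u mu) (y mu)"
          using LP[OF xsNE m(1) m(4) yND bP[OF m(1,2)]] xsp by blast
        have "y mu \<in> A \<union> B" using sub muI unfolding I_def by blast
        moreover have "y mu \<notin> B"
        proof
          assume "y mu \<in> B"
          then obtain c2 where c2: "c2 \<in> C'" "\<not> pure_profile c2" "dist (y mu) c2 < R c2" unfolding B_def by (auto simp: dist_commute)
          have "mu < L c2" using m lAle[OF c2(1)] by (auto simp: lam0_def)
          then show False using status[OF m(1) c2(1) c2(3) _ yND] c2(2) stab by blast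
        qed
        ultimately have "y mu \<in> A" by blast
        then show ?thesis using muI unfolding I_def by blast
      qed
      have "B \<inter> I = {}" using connectedD[OF conn oA oB disj sub] AI by blast
      moreover have "x \<in> I" using ylam lam unfolding I_def by force
      ultimately have "x \<in> A" using sub by blast
      then obtain c1 where c1: "c1 \<in> C'" "pure_profile c1" "dist x c1 < R c1" unfolding A_def by (auto simp: dist_commute)
      have "lam < L c1" using lam lAle[OF c1(1)] by (auto simp: lam0_def)
      then show "linearly_stable (sbr_field u lam) x" using status[OF lam(1) c1(1) c1(3) _ xND] c1(2) by blast
    qed
    moreover have "linearly_stable (sbr_field u lam) x \<Longrightarrow> pure_ND u lam x" using st by blast
    ultimately show ?thesis using st by blast
  qed
  show ?thesis using main lam0pos by blast
qed


end
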